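(* (1) Every connected graph with maximum degree at most $3$ is a $2$-OR-PCG. (2) Every regular graph of even degree $\Delta$ is a $\frac{\Delta}{2}$-OR-PCG. (3) Every bipartite regular graph of odd degree $\Delta$ is a $\lceil\frac{\Delta}{2}\rceil$-OR-PCG.
   Context: All trees are unrooted with edges weighted by nonnegative reals; $d_T(u,v)$ is the weight of the path between leaves $u,v$ of $T$. A graph $H$ is a PCG if there exist a tree $T$ with leaf set $V(H)$ and an interval $I$ of nonnegative reals such that $\{u,v\}\in E(H)$ iff $d_T(u,v)\in I$. A graph $G=(V,E)$ is a $k$-OR-PCG if there exist $k$ PCGs $G_1,\ldots,G_k$, each with vertex set $V$, such that $E=\bigcup_{i=1}^k E(G_i)$. *)

theory Defs
  imports Complex_Main
begin

definition graph_edges_ok :: "'a set \<Rightarrow> 'a set set \<Rightarrow> bool" where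
  "graph_edges_ok V E \<longleftrightarrow> (\<forall>e\<in>E. \<exists>u v. e = {u, v} \<and> u \<in> V \<and> v \<in> V \<and> u \<noteq> v)"

definition simple_graph :: "'a set \<Rightarrow> 'a set set \<Rightarrow> bool" where
  "simple_graph V E \<longleftrightarrow> finite V \<and> V \<noteq> {} \<and> graph_edges_ok V E"

definition degree :: "'a set \<Rightarrow> 'a set set \<Rightarrow> 'a \<Rightarrow> nat" where
  "degree V E v = card {u \<in> V. {u, v} \<in> E}"

definition is_path :: "'a set \<Rightarrow> 'a set set \<Rightarrow> 'a list \<Rightarrow> 'a \<Rightarrow> 'a \<Rightarrow> bool" where
  "is_path V E p u v \<longleftrightarrow> p \<noteq> [] \<and> hd p = u \<and> last p = v \<and> distinct p \<and> set p \<subseteq> V \<and>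
     (\<forall>i. Suc i < length p \<longrightarrow> {p ! i, p ! Suc i} \<in> E)"

definition connected_graph :: "'a set \<Rightarrow> 'a set set \<Rightarrow> bool" where
  "connected_graph V E \<longleftrightarrow> (\<forall>u\<in>V. \<forall>v\<in>V. \<exists>p. is_path V E p u v)"

definition is_cycle :: "'a set \<Rightarrow> 'a set set \<Rightarrow> 'a list \<Rightarrow> bool" where
  "is_cycle V E c \<longleftrightarrow> length c \<ge> 3 \<and> distinct c \<and> set c \<subseteq> V \<and>
     (\<forall>i. Suc i < length c \<longrightarrow> {c ! i, c ! Suc i} \<in> E) \<and> {last c, hd c} \<in> E"

definition acyclic_graph :: "'a set \<Rightarrow> 'a set set \<Rightarrow> bool" where
  "acyclic_graph V E \<longleftrightarrow> (\<nexists>c. is_cycle V E c)"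

definition is_tree :: "'a set \<Rightarrow> 'a set set \<Rightarrow> bool" where
  "is_tree V E \<longleftrightarrow> simple_graph V E \<and> connected_graph V E \<and> acyclic_graph V E"

definition leaves :: "'a set \<Rightarrow> 'a set set \<Rightarrow> 'a set" where
  "leaves V E = {v \<in> V. degree V E v \<le> 1}"

definition path_weight :: "('a set \<Rightarrow> real) \<Rightarrow> 'a list \<Rightarrow> real" where
  "path_weight w p = (\<Sum>i<length p - 1. w {p ! i, p ! Suc i})"

text \<open>Weight of the (unique, in a tree) path between u and v.\<close>
definition tree_dist :: "'a set \<Rightarrow> 'a set set \<Rightarrow> ('a set \<Rightarrow> real) \<Rightarrow> 'a \<Rightarrow> 'a \<Rightarrow> real" where
  "tree_dist V E w u v = (THE d. \<exists>p. is_path V E p u v \<and> d = path_weight w p)"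

definition real_interval :: "real set \<Rightarrow> bool" where
  "real_interval I \<longleftrightarrow> (\<forall>x\<in>I. \<forall>z\<in>I. \<forall>y. x \<le> y \<and> y \<le> z \<longrightarrow> y \<in> I)"

text \<open>Pairwise compatibility graph. Tree nodes have type 'a + nat: the leaves
  are exactly the copies Inl v of the vertices of H; internal nodes are arbitrary.\<close>
definition PCG :: "'a set \<Rightarrow> 'a set set \<Rightarrow> bool" where
  "PCG V E \<longleftrightarrow> graph_edges_ok V E \<and>
     (\<exists>(TV :: ('a + nat) set) TE w I.
        is_tree TV TE \<and> (\<forall>e\<in>TE. w e \<ge> 0) \<and> leaves TV TE = Inl ` V \<and>
        real_interval I \<and> I \<subseteq> {0..} \<and>
        (\<forall>u\<in>V. \<forall>v\<in>V. u \<noteq> v \<longrightarrow>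
            ({u, v} \<in> E \<longleftrightarrow> tree_dist TV TE w (Inl u) (Inl v) \<in> I)))"

definition k_OR_PCG :: "nat \<Rightarrow> 'a set \<Rightarrow> 'a set set \<Rightarrow> bool" where
  "k_OR_PCG k V E \<longleftrightarrow>
     (\<exists>Es :: nat \<Rightarrow> 'a set set. (\<forall>i<k. PCG V (Es i)) \<and> E = (\<Union>i<k. Es i))"

definition regular_graph :: "'a set \<Rightarrow> 'a set set \<Rightarrow> nat \<Rightarrow> bool" where
  "regular_graph V E d \<longleftrightarrow> (\<forall>v\<in>V. degree V E v = d)"

definition bipartite_graph :: "'a set \<Rightarrow> 'a set set \<Rightarrow> bool" where
  "bipartite_graph V E \<longleftrightarrow> (\<exists>A\<subseteq>V. \<forall>e\<in>E. card (e \<inter> A) = 1)"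

end

theory Submission
  imports Defs "HOL-Library.Transitive_Closure_Table"
begin

lemma path_cons_iff:
  "is_path V E (a # b # p) u v \<longleftrightarrow> a = u \<and> a \<in> V \<and> a \<notin> set (b # p) \<and> {a, b} \<in> E \<and> is_path V E (b # p) b v"
proof -
  have "(\<forall>i. Suc i < length (a # b # p) \<longrightarrow> {(a # b # p) ! i, (a # b # p) ! Suc i} \<in> E) \<longleftrightarrow>
        {a, b} \<in> E \<and> (\<forall>i. Suc i < length (b # p) \<longrightarrow> {(b # p) ! i, (b # p) ! Suc i} \<in> E)"
    (is "?L \<longleftrightarrow> ?R")
  proof
    assume ?L
    then show ?R
      by (metis (no_types, lifting) Suc_less_eq length_Cons nth_Cons_0 nth_Cons_Suc zero_less_Suc)
  next
    assume ?R
    show ?L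
    proof (intro allI impI)
      fix i assume "Suc i < length (a # b # p)"
      then show "{(a # b # p) ! i, (a # b # p) ! Suc i} \<in> E"
        using \<open>?R\<close> by (cases i) auto
    qed
  qed
  then show ?thesis unfolding is_path_def by auto
qed

lemma path_single: "is_path V E [a] u v \<longleftrightarrow> a = u \<and> a = v \<and> a \<in> V"
  unfolding is_path_def by auto

lemma path_weight_cons: "path_weight w (a # b # p) = w {a, b} + path_weight w (b # p)"
proof -
  have "path_weight w (a # b # p) = (\<Sum>i<Suc (length p). w {(a#b#p)!i, (a#b#p)!Suc i})"
    by (simp add: path_weight_def)
  also have "\<dots> = w {(a#b#p)!0, (a#b#p)!Suc 0} + (\<Sum>i<length p. w {(a#b#p)!Suc i, (a#b#p)!Suc (Suc i)})"
    by (rule sum.lessThan_Suc_shift)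
  finally show ?thesis by (simp add: path_weight_def)
qed

lemma path_weight_single: "path_weight w [a] = 0"
  unfolding path_weight_def by simp

lemma path_weight_snoc: "p \<noteq> [] \<Longrightarrow> path_weight w (p @ [b]) = path_weight w p + w {last p, b}"
proof (induction p rule: induct_list012)
  case 1 then show ?case by simp
next
  case (2 x) then show ?case by (simp add: path_weight_cons path_weight_single)
next
  case (3 x y zs)
  then show ?case by (simp add: path_weight_cons)
qed

lemma path_weight_rev: "path_weight w (rev p) = path_weight w p"
proof (induction p rule: induct_list012)
  case 1 then show ?case by simp
next
  case (2 x) then show ?case by simp
next
  case (3 x y zs)
  have "path_weight w (rev (x # y # zs)) = path_weight w (rev (y # zs) @ [x])" by simp
  also have "\<dots> = path_weight w (rev (y # zs)) + w {last (rev (y # zs)), x}"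
    by (rule path_weight_snoc) simp
  also have "\<dots> = path_weight w (y # zs) + w {x, y}" using 3 by (simp add: insert_commute)
  finally show ?case by (simp add: path_weight_cons)
qed

lemma is_path_rev: "is_path V E p u v \<Longrightarrow> is_path V E (rev p) v u"
  unfolding is_path_def
proof (elim conjE, intro conjI)
  assume p: "p \<noteq> []" "distinct p" "\<forall>i. Suc i < length p \<longrightarrow> {p ! i, p ! Suc i} \<in> E"
    "hd p = u" "last p = v" "set p \<subseteq> V"
  show "rev p \<noteq> []" "distinct (rev p)" "set (rev p) \<subseteq> V" using p by auto
  show "hd (rev p) = v" "last (rev p) = u" using p by (auto simp: hd_rev last_rev)
  show "\<forall>i. Suc i < length (rev p) \<longrightarrow> {rev p ! i, rev p ! Suc i} \<in> E"
  proof (intro allI impI)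
    fix i assume i: "Suc i < length (rev p)"
    let ?j = "length p - Suc (Suc i)"
    have "Suc ?j < length p" using i by auto
    then have "{p ! ?j, p ! Suc ?j} \<in> E" using p by auto
    moreover have "rev p ! i = p ! Suc ?j" "rev p ! Suc i = p ! ?j" using i
      by (auto simp: rev_nth Suc_diff_Suc)
    ultimately show "{rev p ! i, rev p ! Suc i} \<in> E" by (simp add: insert_commute)
  qed
qed

definition tree_ok :: "'b set \<Rightarrow> 'b set set \<Rightarrow> bool" where
  "tree_ok TV TE \<longleftrightarrow> simple_graph TV TE \<and> connected_graph TV TE \<and>
     (\<forall>a b p q. is_path TV TE p a b \<and> is_path TV TE q a b \<longrightarrow> p = q)"

lemma tree_ok_is_tree:
  assumes "tree_ok TV TE" shows "is_tree TV TE"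
proof -
  have "acyclic_graph TV TE"
    unfolding acyclic_graph_def
  proof
    assume "\<exists>c. is_cycle TV TE c"
    then obtain c where c: "is_cycle TV TE c" by blast
    have "is_path TV TE c (hd c) (last c)" using c unfolding is_cycle_def is_path_def by auto
    moreover have "is_path TV TE [hd c, last c] (hd c) (last c)"
    proof -
      have "c \<noteq> []" using c unfolding is_cycle_def by auto
      have "length c \<ge> 3" using c unfolding is_cycle_def by auto
      have "hd c \<noteq> last c"
      proof
        assume "hd c = last c"
        then have e: "c ! 0 = c ! (length c - 1)" using \<open>c \<noteq> []\<close> by (simp add: hd_conv_nth last_conv_nth)
        have d: "distinct c" using c unfolding is_cycle_def by auto
        have l1: "0 < length c" and l2: "length c - 1 < length c" using \<open>length c \<ge> 3\<close> by auto
        have "0 = length c - 1" using nth_eq_iff_index_eq[OF d l1 l2] e by blast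
        then show False using \<open>length c \<ge> 3\<close> by simp
      qed
      moreover have "{last c, hd c} \<in> TE" using c unfolding is_cycle_def by auto
      moreover have "hd c \<in> TV" "last c \<in> TV" using c \<open>c \<noteq> []\<close> unfolding is_cycle_def by auto
      ultimately show ?thesis unfolding is_path_def by (auto simp: insert_commute)
    qed
    ultimately have "c = [hd c, last c]" using assms unfolding tree_ok_def by blast
    then have "length c = 2" by (metis length_Cons list.size(3) numeral_2_eq_2 One_nat_def)
    then show False using c unfolding is_cycle_def by auto
  qed
  then show ?thesis using assms unfolding tree_ok_def is_tree_def by auto
qed

lemma tree_dist_eq:
  assumes "tree_ok TV TE" "is_path TV TE p a b"
  shows "tree_dist TV TE w a b = path_weight w p"
proof -
  have u: "\<exists>!d. \<exists>p. is_path TV TE p a b \<and> d = path_weight w p"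
    using assms unfolding tree_ok_def by blast
  show ?thesis unfolding tree_dist_def
    by (rule the1_equality[OF u]) (use assms(2) in blast)
qed

lemma tree_ok_single: "tree_ok {r} {}"
proof -
  have "simple_graph {r} {}" unfolding simple_graph_def graph_edges_ok_def by auto
  moreover have "is_path {r} {} p a b \<longleftrightarrow> p = [r] \<and> a = r \<and> b = r" for p a b
  proof
    assume "is_path {r} {} p a b"
    then have "p \<noteq> []" "set p \<subseteq> {r}" "distinct p" "hd p = a" "last p = b"
      "\<forall>i. Suc i < length p \<longrightarrow> {p ! i, p ! Suc i} \<in> {}"
      unfolding is_path_def by auto
    then have "p = [hd p]"
    proof (cases p)
      case (Cons x q)
      then show ?thesis using \<open>\<forall>i. Suc i < length p \<longrightarrow> {p ! i, p ! Suc i} \<in> {}\<close>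
        by (cases q) auto
    qed simp
    then show "p = [r] \<and> a = r \<and> b = r" using \<open>set p \<subseteq> {r}\<close> \<open>hd p = a\<close> \<open>last p = b\<close>
      by (metis insert_subset last_ConsL list.set(2) singletonD)
  next
    assume "p = [r] \<and> a = r \<and> b = r" then show "is_path {r} {} p a b" unfolding is_path_def by auto
  qed
  ultimately show ?thesis unfolding tree_ok_def connected_graph_def by auto
qed


lemma path_hd_last_eq:
  assumes "is_path V E p a a" shows "p = [a]"
proof (rule ccontr)
  assume ne: "p \<noteq> [a]"
  have p: "p \<noteq> []" "hd p = a" "last p = a" "distinct p" using assms unfolding is_path_def by auto
  have "length p \<ge> 2"
  proof (rule ccontr)
    assume "\<not> length p \<ge> 2"
    then have "p = [hd p]" using p(1) by (cases p; cases "tl p") auto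
    then show False using ne p(2) by simp
  qed
  have e: "p ! 0 = p ! (length p - 1)" using p by (simp add: hd_conv_nth last_conv_nth)
  have l1: "0 < length p" and l2: "length p - 1 < length p" using \<open>length p \<ge> 2\<close> by auto
  have "0 = length p - 1" using nth_eq_iff_index_eq[OF p(4) l1 l2] e by blast
  then show False using \<open>length p \<ge> 2\<close> by simp
qed

lemma path_in_V: "is_path V E p a b \<Longrightarrow> a \<in> V \<and> b \<in> V"
  unfolding is_path_def by (metis hd_in_set last_in_set subsetD)

context
  fixes TV :: "'b set" and TE :: "'b set set" and y z :: 'b
  assumes ok: "graph_edges_ok TV TE" and y: "y \<in> TV" and z: "z \<notin> TV"
begin

lemma yz: "y \<noteq> z" using y z by auto

lemma edge_new: "{c, z} \<in> insert {z, y} TE \<Longrightarrow> c = y"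
proof -
  assume h: "{c, z} \<in> insert {z, y} TE"
  have "{c, z} \<notin> TE"
  proof
    assume "{c, z} \<in> TE"
    then obtain u v where "{c, z} = {u, v}" "u \<in> TV" "v \<in> TV" using ok unfolding graph_edges_ok_def by blast
    then have "z \<in> TV" by (metis doubleton_eq_iff)
    then show False using z by simp
  qed
  then have "{c, z} = {z, y}" using h by simp
  then show "c = y" using yz by (metis doubleton_eq_iff)
qed

lemma path_avoid:
  assumes "is_path (insert z TV) (insert {z, y} TE) p a b" "z \<notin> set p"
  shows "is_path TV TE p a b"
proof -
  have "set p \<subseteq> TV" using assms unfolding is_path_def by auto
  moreover have "\<forall>i. Suc i < length p \<longrightarrow> {p ! i, p ! Suc i} \<in> TE"
  proof (intro allI impI)
    fix i assume i: "Suc i < length p"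
    then have "{p ! i, p ! Suc i} \<in> insert {z, y} TE" using assms(1) unfolding is_path_def by auto
    moreover have "p ! i \<noteq> z" "p ! Suc i \<noteq> z" using assms(2) i by (auto simp: in_set_conv_nth)
    then have "{p ! i, p ! Suc i} \<noteq> {z, y}" by (metis insertCI doubleton_eq_iff)
    ultimately show "{p ! i, p ! Suc i} \<in> TE" by simp
  qed
  ultimately show ?thesis using assms(1) unfolding is_path_def by auto
qed

lemma path_no_z:
  assumes "is_path (insert z TV) (insert {z, y} TE) p a b" "a \<noteq> z" "b \<noteq> z"
  shows "z \<notin> set p"
proof
  assume "z \<in> set p"
  then obtain i where i: "i < length p" "p ! i = z" by (auto simp: in_set_conv_nth)
  have p: "p \<noteq> []" "hd p = a" "last p = b" "distinct p"
    "\<forall>i. Suc i < length p \<longrightarrow> {p ! i, p ! Suc i} \<in> insert {z, y} TE"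
    using assms unfolding is_path_def by auto
  have "i \<noteq> 0" using i p assms(2) by (metis hd_conv_nth)
  have "i \<noteq> length p - 1" using i p assms(3) by (metis last_conv_nth)
  obtain j where j: "i = Suc j" using \<open>i \<noteq> 0\<close> by (cases i) auto
  have "Suc i < length p" using i \<open>i \<noteq> length p - 1\<close> by auto
  have "{p ! j, p ! Suc j} \<in> insert {z, y} TE" using p(5) j i by auto
  then have "p ! j = y" using edge_new j i by simp
  have "{p ! i, p ! Suc i} \<in> insert {z, y} TE" using p(5) \<open>Suc i < length p\<close> by auto
  then have "{p ! Suc i, z} \<in> insert {z, y} TE" using i by (simp add: insert_commute)
  then have "p ! Suc i = y" using edge_new by simp
  then have "p ! j = p ! Suc i" using \<open>p ! j = y\<close> by simp
  then have "j = Suc i" using nth_eq_iff_index_eq[OF p(4)] \<open>Suc i < length p\<close> j by simp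
  then show False using j by simp
qed

lemma path_mono:
  "is_path TV TE p a b \<Longrightarrow> is_path (insert z TV) (insert {z, y} TE) p a b"
  unfolding is_path_def by auto

lemma path_from_z:
  assumes "is_path (insert z TV) (insert {z, y} TE) p z b" "b \<in> TV"
  shows "\<exists>q. p = z # q \<and> is_path TV TE q y b"
proof -
  have "p \<noteq> []" "hd p = z" using assms unfolding is_path_def by auto
  then obtain q where q: "p = z # q" by (cases p) auto
  have "q \<noteq> []"
  proof
    assume "q = []"
    then have "last p = z" using q by simp
    then have "b = z" using assms unfolding is_path_def by auto
    then show False using assms(2) z by simp
  qed
  then obtain c r where cr: "q = c # r" by (cases q) auto
  have "{z, c} \<in> insert {z, y} TE" "z \<notin> set q" "is_path (insert z TV) (insert {z, y} TE) q c b"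
    using assms(1) unfolding q cr path_cons_iff by auto
  then have "c = y" using edge_new by (simp add: insert_commute)
  have "is_path TV TE q c b" by (rule path_avoid) fact+
  then show ?thesis using q \<open>c = y\<close> cr by auto
qed

lemma pendant_tree_ok:
  assumes t: "tree_ok TV TE"
  shows "tree_ok (insert z TV) (insert {z, y} TE)"
proof -
  let ?V = "insert z TV" and ?E = "insert {z, y} TE"
  have sg0: "finite TV" "TV \<noteq> {}" using t unfolding tree_ok_def simple_graph_def by auto
  have "graph_edges_ok ?V ?E"
    unfolding graph_edges_ok_def
  proof
    fix e assume "e \<in> ?E"
    then show "\<exists>u v. e = {u, v} \<and> u \<in> ?V \<and> v \<in> ?V \<and> u \<noteq> v"
    proof
      assume "e = {z, y}" then show ?thesis using yz y by blast
    next
      assume "e \<in> TE"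
      then obtain u v where "e = {u, v}" "u \<in> TV" "v \<in> TV" "u \<noteq> v" using ok unfolding graph_edges_ok_def by blast
      then show ?thesis by blast
    qed
  qed
  then have sg: "simple_graph ?V ?E" using sg0 unfolding simple_graph_def by simp
  have conn: "connected_graph ?V ?E"
    unfolding connected_graph_def
  proof (intro ballI)
    fix a b assume a: "a \<in> ?V" and b: "b \<in> ?V"
    have zb: "\<exists>p. is_path ?V ?E p z b" if bb: "b \<in> TV" for b
    proof -
      have "\<exists>q. is_path TV TE q y b" using t y bb unfolding tree_ok_def connected_graph_def by simp
      then obtain q where "is_path TV TE q y b" by blast
      then have q: "is_path ?V ?E q y b" by (rule path_mono)
      have "z \<notin> set q" using \<open>is_path TV TE q y b\<close> z unfolding is_path_def by auto
      then obtain c r where cr: "q = c # r" "c = y"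
        using q unfolding is_path_def by (cases q) auto
      have "is_path ?V ?E (z # q) z b"
        unfolding cr path_cons_iff using q \<open>z \<notin> set q\<close> cr by auto
      then show ?thesis by blast
    qed
    show "\<exists>p. is_path ?V ?E p a b"
    proof (cases "a = z")
      case True
      show ?thesis
      proof (cases "b = z")
        case True
        then have "is_path ?V ?E [z] a b" using \<open>a = z\<close> unfolding is_path_def by auto
        then show ?thesis by blast
      next
        case False then show ?thesis using zb b True by auto
      qed
    next
      case False
      show ?thesis
      proof (cases "b = z")
        case True
        then obtain p where "is_path ?V ?E p z a" using zb a False by auto
        then have "is_path ?V ?E (rev p) a z" by (rule is_path_rev)
        then show ?thesis using True by blast
      next
        case False
        have "a \<in> TV" "b \<in> TV" using a b \<open>a \<noteq> z\<close> False by auto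
        then have "\<exists>p. is_path TV TE p a b" using t unfolding tree_ok_def connected_graph_def by simp
        then obtain p where "is_path TV TE p a b" by blast
        from path_mono[OF this] show ?thesis by blast
      qed
    qed
  qed
  have uz: "p = q" if pz: "is_path ?V ?E p z b" "is_path ?V ?E q z b" for p q b
  proof (cases "b = z")
    case True
    have "p = [z]" using path_hd_last_eq[of ?V ?E p z] that(1) True by simp
    moreover have "q = [z]" using path_hd_last_eq[of ?V ?E q z] that(2) True by simp
    ultimately show ?thesis by simp
  next
    case False
    then have "b \<in> TV" using path_in_V[OF that(1)] by auto
    obtain p' where "p = z # p'" "is_path TV TE p' y b" using path_from_z[OF pz(1) \<open>b \<in> TV\<close>] by blast
    moreover obtain q' where "q = z # q'" "is_path TV TE q' y b" using path_from_z[OF pz(2) \<open>b \<in> TV\<close>] by blast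
    ultimately show ?thesis using t unfolding tree_ok_def by auto
  qed
  have uniq: "p = q" if pq: "is_path ?V ?E p a b" "is_path ?V ?E q a b" for p q a b
  proof (cases "a = z")
    case True then show ?thesis using uz[of p b q] pq by simp
  next
    case False
    show ?thesis
    proof (cases "b = z")
      case True
      have "rev p = rev q" using uz[of "rev p" a "rev q"] is_path_rev[OF pq(1)] is_path_rev[OF pq(2)] True by simp
      then show ?thesis by simp
    next
      case False
      have "z \<notin> set p" using path_no_z[OF pq(1) \<open>a \<noteq> z\<close> False] .
      moreover have "z \<notin> set q" using path_no_z[OF pq(2) \<open>a \<noteq> z\<close> False] .
      ultimately have "is_path TV TE p a b" "is_path TV TE q a b" using path_avoid[OF pq(1)] path_avoid[OF pq(2)] by auto
      moreover have "\<forall>a b p q. is_path TV TE p a b \<and> is_path TV TE q a b \<longrightarrow> p = q" using t unfolding tree_ok_def by simp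
      ultimately show ?thesis by blast
    qed
  qed
  show ?thesis unfolding tree_ok_def using sg conn uniq by blast
qed

lemma pendant_F:
  assumes t: "tree_ok TV TE"
    and d: "\<forall>a\<in>TV. \<forall>b\<in>TV. tree_dist TV TE w a b = F a b"
    and Fz: "\<forall>b\<in>TV. F z b = w {z, y} + F y b \<and> F b z = F z b" and Fzz: "F z z = 0"
  shows "tree_ok (insert z TV) (insert {z, y} TE) \<and>
    (\<forall>a\<in>insert z TV. \<forall>b\<in>insert z TV. tree_dist (insert z TV) (insert {z, y} TE) w a b = F a b)"
proof -
  let ?V = "insert z TV" and ?E = "insert {z, y} TE"
  have t': "tree_ok ?V ?E" by (rule pendant_tree_ok[OF t])
  have old: "tree_dist ?V ?E w a b = F a b" if ab: "a \<in> TV" "b \<in> TV" for a b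
  proof -
    obtain p where p: "is_path TV TE p a b" using t ab unfolding tree_ok_def connected_graph_def by blast
    have "tree_dist ?V ?E w a b = path_weight w p" using tree_dist_eq[OF t' path_mono[OF p]] .
    also have "\<dots> = tree_dist TV TE w a b" using tree_dist_eq[OF t p] by simp
    finally show ?thesis using d ab by simp
  qed
  have zb: "tree_dist ?V ?E w z b = F z b \<and> tree_dist ?V ?E w b z = F z b" if bb: "b \<in> TV" for b
  proof -
    obtain q where q0: "is_path TV TE q y b" using t y bb unfolding tree_ok_def connected_graph_def by blast
    then have q: "is_path ?V ?E q y b" by (rule path_mono)
    have "z \<notin> set q" using q0 z unfolding is_path_def by auto
    then obtain c r where cr: "q = c # r" "c = y"
      using q unfolding is_path_def by (cases q) auto
    have zq: "is_path ?V ?E (z # q) z b"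
      unfolding cr path_cons_iff using q \<open>z \<notin> set q\<close> cr by auto
    have "tree_dist ?V ?E w z b = path_weight w (z # q)" using tree_dist_eq[OF t' zq] .
    also have "\<dots> = w {z, y} + path_weight w q" using cr by (simp add: path_weight_cons)
    also have "path_weight w q = F y b" using tree_dist_eq[OF t q0, of w] d y bb by simp
    finally have 1: "tree_dist ?V ?E w z b = F z b" using Fz bb by simp
    have "tree_dist ?V ?E w b z = path_weight w (rev (z # q))" using tree_dist_eq[OF t' is_path_rev[OF zq]] .
    then have "tree_dist ?V ?E w b z = tree_dist ?V ?E w z b"
      using tree_dist_eq[OF t' zq] path_weight_rev by metis
    then show ?thesis using 1 by simp
  qed
  have zz: "tree_dist ?V ?E w z z = F z z"
  proof -
    have "is_path ?V ?E [z] z z" unfolding is_path_def by auto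
    then show ?thesis using tree_dist_eq[OF t'] Fzz path_weight_single by metis
  qed
  show ?thesis using t' old zb zz Fz by auto
qed

end


definition CR :: "'a set \<Rightarrow> 'a set set \<Rightarrow> bool" where
  "CR V E \<longleftrightarrow> (\<exists>(x :: 'a \<Rightarrow> real) (\<alpha> :: 'a \<Rightarrow> real). (\<forall>v. 0 \<le> \<alpha> v) \<and>
     (\<forall>u\<in>V. \<forall>v\<in>V. u \<noteq> v \<longrightarrow> ({u, v} \<in> E \<longleftrightarrow> \<alpha> u + \<alpha> v + \<bar>x u - x v\<bar> = 4)))"

lemma card_ge2: "finite A \<Longrightarrow> a \<in> A \<Longrightarrow> b \<in> A \<Longrightarrow> a \<noteq> b \<Longrightarrow> card A \<ge> 2"
proof -
  assume "finite A" "a \<in> A" "b \<in> A" "a \<noteq> b"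
  then have "card {a, b} \<le> card A" by (intro card_mono) auto
  then show ?thesis using \<open>a \<noteq> b\<close> by simp
qed

lemma tree_ok_graph_edges_ok: "tree_ok TV TE \<Longrightarrow> graph_edges_ok TV TE"
  unfolding tree_ok_def simple_graph_def by simp

locale cater =
  fixes vs :: "'a list" and x :: "'a \<Rightarrow> real" and \<alpha> :: "'a \<Rightarrow> real"
  assumes dist: "distinct vs" and sorted: "sorted (map x vs)" and apos: "\<forall>v. 0 \<le> \<alpha> v"
begin

definition P :: "nat \<Rightarrow> real" where "P i = x (vs ! i)"
definition pos :: "'a + nat \<Rightarrow> real" where "pos a = (case a of Inl v \<Rightarrow> x v | Inr i \<Rightarrow> P i)"
definition hang :: "'a + nat \<Rightarrow> real" where "hang a = (case a of Inl v \<Rightarrow> \<alpha> v | Inr i \<Rightarrow> 0)"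
definition F :: "'a + nat \<Rightarrow> 'a + nat \<Rightarrow> real" where
  "F a b = (if a = b then 0 else hang a + hang b + \<bar>pos a - pos b\<bar>)"
definition w :: "('a + nat) set \<Rightarrow> real" where
  "w e = (SOME r. \<exists>a b. e = {a, b} \<and> r = F a b)"

lemma F_sym: "F a b = F b a"
  unfolding F_def by (auto simp: abs_minus_commute)

lemma w_eq: "w {a, b} = F a b"
proof -
  have "\<exists>r. \<exists>a' b'. {a, b} = {a', b'} \<and> r = F a' b'" by blast
  then have "\<exists>a' b'. {a, b} = {a', b'} \<and> w {a, b} = F a' b'"
    unfolding w_def by (rule someI_ex)
  then obtain a' b' where "{a, b} = {a', b'}" "w {a, b} = F a' b'" by blast
  then have "(a = a' \<and> b = b') \<or> (a = b' \<and> b = a')" "w {a, b} = F a' b'" by (simp_all add: doubleton_eq_iff)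
  then show ?thesis using F_sym[of a b] by auto
qed

lemma hang_nn: "hang a \<ge> 0"
  using apos unfolding hang_def by (cases a) auto

lemma F_nn: "F a b \<ge> 0"
  unfolding F_def using hang_nn[of a] hang_nn[of b] by auto

lemma P_mono: "i \<le> j \<Longrightarrow> j < length vs \<Longrightarrow> P i \<le> P j"
  unfolding P_def using sorted_nth_mono[OF sorted, of i j] by simp

definition SE :: "nat \<Rightarrow> ('a + nat) set set" where
  "SE k = {{Inr i, Inr (Suc i)} | i. Suc i < k}"

lemma spine:
  assumes "1 \<le> k" "k \<le> length vs"
  shows "tree_ok (Inr ` {..<k}) (SE k) \<and>
    (\<forall>a\<in>Inr ` {..<k}. \<forall>b\<in>Inr ` {..<k}. tree_dist (Inr ` {..<k}) (SE k) w a b = F a b)"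
  using assms
proof (induction k rule: dec_induct)
  case base
  have e: "(Inr ` {..<1::nat} :: ('a + nat) set) = {Inr 0}" "SE 1 = {}" unfolding SE_def by (auto simp: less_one image_iff)
  have "tree_dist {Inr 0} {} w (Inr 0) (Inr 0) = 0"
  proof -
    have "is_path {Inr 0} {} [Inr 0] (Inr 0) (Inr 0)" unfolding is_path_def by auto
    then show ?thesis using tree_dist_eq[OF tree_ok_single] path_weight_single by metis
  qed
  then show ?case unfolding e using tree_ok_single by (simp add: F_def)
next
  case (step k)
  let ?z = "Inr k :: 'a + nat" and ?y = "Inr (k - 1) :: 'a + nat"
  have k: "Suc k \<le> length vs" "1 \<le> k" using step by auto
  have IH: "tree_ok (Inr ` {..<k}) (SE k)"
    "\<forall>a\<in>Inr ` {..<k}. \<forall>b\<in>Inr ` {..<k}. tree_dist (Inr ` {..<k}) (SE k) w a b = F a b"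
    using step k by auto
  have V: "Inr ` {..<Suc k} = insert ?z (Inr ` {..<k})" by (auto simp: lessThan_Suc)
  obtain m where m: "k = Suc m" using k by (cases k) auto
  have E: "SE (Suc k) = insert {?z, ?y} (SE k)"
  proof (rule set_eqI)
    fix e
    show "e \<in> SE (Suc k) \<longleftrightarrow> e \<in> insert {?z, ?y} (SE k)"
    proof
      assume "e \<in> SE (Suc k)"
      then obtain i where i: "e = {Inr i, Inr (Suc i)}" "Suc i < Suc k" unfolding SE_def by blast
      show "e \<in> insert {?z, ?y} (SE k)"
      proof (cases "Suc i < k")
        case True then show ?thesis using i unfolding SE_def by blast
      next
        case False
        then have "i = m" using i m by simp
        then have "e = {?z, ?y}" using i m by (simp add: insert_commute)
        then show ?thesis by simp
      qed
    next
      assume "e \<in> insert {?z, ?y} (SE k)"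
      then show "e \<in> SE (Suc k)"
      proof
        assume "e = {?z, ?y}"
        then have "e = {Inr m, Inr (Suc m)}" using m by (simp add: insert_commute)
        then show ?thesis unfolding SE_def using m by blast
      next
        assume "e \<in> SE k"
        then obtain i where i: "e = {Inr i, Inr (Suc i)}" "Suc i < k" unfolding SE_def by blast
        then show ?thesis unfolding SE_def by auto
      qed
    qed
  qed
  have y: "?y \<in> Inr ` {..<k}" using k by auto
  have z: "?z \<notin> Inr ` {..<k}" by auto
  have Fz: "\<forall>b\<in>Inr ` {..<k}. F ?z b = w {?z, ?y} + F ?y b \<and> F b ?z = F ?z b"
  proof
    fix b :: "'a + nat" assume "b \<in> Inr ` {..<k}"
    then obtain j where j: "b = Inr j" "j < k" by auto
    have m1: "P j \<le> P (k - 1)" "P (k - 1) \<le> P k" using P_mono k j by auto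
    have f1: "F ?z b = P k - P j" unfolding F_def pos_def hang_def using j m1 by auto
    have f2: "w {?z, ?y} = P k - P (k - 1)" unfolding w_eq F_def pos_def hang_def using m1 m by auto
    have f3: "F ?y b = P (k - 1) - P j"
    proof (cases "j = k - 1")
      case True then show ?thesis unfolding F_def using j by simp
    next
      case False then show ?thesis unfolding F_def pos_def hang_def using j m1 by auto
    qed
    have "F ?z b = w {?z, ?y} + F ?y b" unfolding f1 f2 f3 by simp
    then show "F ?z b = w {?z, ?y} + F ?y b \<and> F b ?z = F ?z b" using F_sym by simp
  qed
  have "F ?z ?z = 0" unfolding F_def by simp
  from pendant_F[OF tree_ok_graph_edges_ok[OF IH(1)] y z IH(1) IH(2) Fz this]
  show ?case unfolding V E .
qed

definition LV :: "nat \<Rightarrow> ('a + nat) set" where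
  "LV l = Inr ` {..<length vs} \<union> Inl ` set (take l vs)"
definition LE :: "nat \<Rightarrow> ('a + nat) set set" where
  "LE l = SE (length vs) \<union> {{Inl (vs ! i), Inr i} | i. i < l}"

lemma leaves_build:
  assumes "l \<le> length vs" "1 \<le> length vs"
  shows "tree_ok (LV l) (LE l) \<and> (\<forall>a\<in>LV l. \<forall>b\<in>LV l. tree_dist (LV l) (LE l) w a b = F a b)"
  using assms
proof (induction l)
  case 0
  have "LV 0 = Inr ` {..<length vs}" "LE 0 = SE (length vs)" unfolding LV_def LE_def by auto
  then show ?case using spine[of "length vs"] 0 by simp
next
  case (Suc l)
  let ?z = "Inl (vs ! l) :: 'a + nat" and ?y = "Inr l :: 'a + nat"
  have l: "l < length vs" using Suc by auto
  have IH: "tree_ok (LV l) (LE l)" "\<forall>a\<in>LV l. \<forall>b\<in>LV l. tree_dist (LV l) (LE l) w a b = F a b"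
    using Suc by auto
  have V: "LV (Suc l) = insert ?z (LV l)" unfolding LV_def using l by (auto simp: take_Suc_conv_app_nth)
  have E: "LE (Suc l) = insert {?z, ?y} (LE l)" unfolding LE_def by (auto simp: less_Suc_eq)
  have y: "?y \<in> LV l" unfolding LV_def using l by auto
  have z: "?z \<notin> LV l"
  proof -
    have "vs ! l \<notin> set (take l vs)"
    proof
      assume "vs ! l \<in> set (take l vs)"
      then obtain i where i: "i < length (take l vs)" "take l vs ! i = vs ! l" by (auto simp: in_set_conv_nth)
      then have "vs ! i = vs ! l" "i < l" by auto
      then show False using nth_eq_iff_index_eq[OF dist] l by auto
    qed
    then show ?thesis unfolding LV_def by auto
  qed
  have Fz: "\<forall>b\<in>LV l. F ?z b = w {?z, ?y} + F ?y b \<and> F b ?z = F ?z b"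
  proof
    fix b :: "'a + nat" assume b: "b \<in> LV l"
    have wz: "w {?z, ?y} = \<alpha> (vs ! l)" unfolding w_eq F_def pos_def hang_def P_def by simp
    have "F ?z b = w {?z, ?y} + F ?y b"
    proof (cases b)
      case (Inl v)
      then have "b \<noteq> ?z" using b z by auto
      then have "F ?z b = \<alpha> (vs ! l) + \<alpha> v + \<bar>x (vs ! l) - x v\<bar>" unfolding F_def pos_def hang_def using Inl by simp
      moreover have "F ?y b = \<alpha> v + \<bar>x (vs ! l) - x v\<bar>" unfolding F_def pos_def hang_def P_def using Inl by simp
      ultimately show ?thesis unfolding wz by simp
    next
      case (Inr j)
      then have "F ?z b = \<alpha> (vs ! l) + \<bar>x (vs ! l) - P j\<bar>" unfolding F_def pos_def hang_def P_def by simp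
      moreover have "F ?y b = \<bar>x (vs ! l) - P j\<bar>" unfolding F_def pos_def hang_def P_def using Inr by (cases "j = l") auto
      ultimately show ?thesis unfolding wz by simp
    qed
    then show "F ?z b = w {?z, ?y} + F ?y b \<and> F b ?z = F ?z b" using F_sym by simp
  qed
  have "F ?z ?z = 0" unfolding F_def by simp
  from pendant_F[OF tree_ok_graph_edges_ok[OF IH(1)] y z IH(1) IH(2) Fz this]
  show ?case unfolding V E .
qed

lemma LV_full: "LV (length vs) = Inr ` {..<length vs} \<union> Inl ` set vs"
  unfolding LV_def by simp

lemma LE_cases:
  assumes "e \<in> LE (length vs)"
  shows "(\<exists>i. Suc i < length vs \<and> e = {Inr i, Inr (Suc i)}) \<or> (\<exists>i. i < length vs \<and> e = {Inl (vs ! i), Inr i})"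
  using assms unfolding LE_def SE_def by blast

lemma final_tree:
  assumes n2: "2 \<le> length vs"
  shows "is_tree (LV (length vs)) (LE (length vs))"
    and "\<forall>e\<in>LE (length vs). w e \<ge> 0"
    and "leaves (LV (length vs)) (LE (length vs)) = Inl ` set vs"
    and "\<forall>u\<in>set vs. \<forall>v\<in>set vs. u \<noteq> v \<longrightarrow>
           tree_dist (LV (length vs)) (LE (length vs)) w (Inl u) (Inl v) = \<alpha> u + \<alpha> v + \<bar>x u - x v\<bar>"
proof -
  let ?n = "length vs"
  have lb: "tree_ok (LV ?n) (LE ?n) \<and> (\<forall>a\<in>LV ?n. \<forall>b\<in>LV ?n. tree_dist (LV ?n) (LE ?n) w a b = F a b)"
    using leaves_build[of ?n] n2 by simp
  then show "is_tree (LV ?n) (LE ?n)" using tree_ok_is_tree by blast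
  show "\<forall>e\<in>LE ?n. w e \<ge> 0"
  proof
    fix e assume "e \<in> LE ?n"
    then obtain a b where "e = {a, b}" using LE_cases by blast
    then show "w e \<ge> 0" using w_eq F_nn by simp
  qed
  show "\<forall>u\<in>set vs. \<forall>v\<in>set vs. u \<noteq> v \<longrightarrow>
           tree_dist (LV ?n) (LE ?n) w (Inl u) (Inl v) = \<alpha> u + \<alpha> v + \<bar>x u - x v\<bar>"
  proof (intro ballI impI)
    fix u v assume uv: "u \<in> set vs" "v \<in> set vs" "u \<noteq> v"
    then have "Inl u \<in> LV ?n" "Inl v \<in> LV ?n" unfolding LV_full by auto
    then have "tree_dist (LV ?n) (LE ?n) w (Inl u) (Inl v) = F (Inl u) (Inl v)" using lb by blast
    then show "tree_dist (LV ?n) (LE ?n) w (Inl u) (Inl v) = \<alpha> u + \<alpha> v + \<bar>x u - x v\<bar>"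
      unfolding F_def pos_def hang_def using uv by simp
  qed
  have fin: "finite (LV ?n)" unfolding LV_full by simp
  have leafL: "degree (LV ?n) (LE ?n) (Inl v) \<le> 1" if v: "v \<in> set vs" for v
  proof -
    let ?N = "{c \<in> LV ?n. {c, Inl v} \<in> LE ?n}"
    have c: "\<exists>i. i < ?n \<and> c = Inr i \<and> vs ! i = v" if "c \<in> ?N" for c
    proof -
      have "{c, Inl v} \<in> LE ?n" using that by simp
      from LE_cases[OF this] show ?thesis
      proof (elim disjE exE conjE)
        fix i assume "{c, Inl v} = {Inr i, Inr (Suc i)}"
        then have "Inl v \<in> {Inr i, Inr (Suc i) :: 'a + nat}" by (metis insertI1 insert_commute)
        then show ?thesis by simp
      next
        fix i assume i: "i < ?n" "{c, Inl v} = {Inl (vs ! i), Inr i}"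
        then have "c = Inr i \<and> vs ! i = v" by (simp add: doubleton_eq_iff)
        then show ?thesis using i by blast
      qed
    qed
    have "\<forall>c\<in>?N. \<forall>c'\<in>?N. c = c'"
    proof (intro ballI)
      fix c c' assume "c \<in> ?N" "c' \<in> ?N"
      obtain i where "i < ?n" "c = Inr i" "vs ! i = v" using c \<open>c \<in> ?N\<close> by blast
      moreover obtain i' where "i' < ?n" "c' = Inr i'" "vs ! i' = v" using c \<open>c' \<in> ?N\<close> by blast
      ultimately show "c = c'" using nth_eq_iff_index_eq[OF dist] by auto
    qed
    moreover have "finite ?N" using fin by simp
    ultimately have "card ?N \<le> Suc 0" using card_le_Suc0_iff_eq by blast
    then show ?thesis unfolding degree_def by simp
  qed
  have nleafR: "\<not> degree (LV ?n) (LE ?n) (Inr i) \<le> 1" if i: "i < ?n" for i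
  proof -
    let ?N = "{c \<in> LV ?n. {c, Inr i} \<in> LE ?n}"
    have "Inl (vs ! i) \<in> ?N" using i unfolding LV_full LE_def by auto
    moreover have "\<exists>j. Inr j \<in> ?N"
    proof (cases "Suc i < ?n")
      case True
      then have "{Inr (Suc i), Inr i} \<in> LE ?n" unfolding LE_def SE_def by (auto simp: insert_commute)
      then show ?thesis using True unfolding LV_full by blast
    next
      case False
      then obtain j where j: "i = Suc j" using n2 i by (cases i) auto
      then have "{Inr j, Inr i} \<in> LE ?n" unfolding LE_def SE_def using i by auto
      moreover have "Inr j \<in> LV ?n" unfolding LV_full using j i by auto
      ultimately have "Inr j \<in> ?N" by simp
      then show ?thesis by blast
    qed
    then obtain j where "Inr j \<in> ?N" by blast
    moreover have "finite ?N" using fin by simp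
    ultimately have "card ?N \<ge> 2" using card_ge2[of ?N "Inl (vs ! i)" "Inr j"] by auto
    then show ?thesis unfolding degree_def by simp
  qed
  show "leaves (LV ?n) (LE ?n) = Inl ` set vs"
  proof (rule set_eqI)
    fix a
    show "a \<in> leaves (LV ?n) (LE ?n) \<longleftrightarrow> a \<in> Inl ` set vs"
    proof (cases a)
      case (Inl v)
      have mem: "Inl v \<in> LV ?n \<longleftrightarrow> v \<in> set vs" unfolding LV_full by auto
      show ?thesis unfolding leaves_def using leafL mem Inl by auto
    next
      case (Inr i)
      have mem: "Inr i \<in> LV ?n \<longleftrightarrow> i < ?n" unfolding LV_full by auto
      show ?thesis unfolding leaves_def using nleafR mem Inr by auto
    qed
  qed
qed

end

theorem CR_PCG:
  assumes fin: "finite V" and ne: "V \<noteq> {}" and ok: "graph_edges_ok V E" and cr: "CR V E"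
  shows "PCG V E"
proof -
  obtain x \<alpha> where xa: "\<forall>v. 0 \<le> (\<alpha> v :: real)"
    "\<forall>u\<in>V. \<forall>v\<in>V. u \<noteq> v \<longrightarrow> ({u, v} \<in> E \<longleftrightarrow> \<alpha> u + \<alpha> v + \<bar>(x :: 'a \<Rightarrow> real) u - x v\<bar> = 4)"
    using cr unfolding CR_def by blast
  obtain ls where ls: "set ls = V" "distinct ls" using finite_distinct_list[OF fin] by blast
  define vs where "vs = sort_key x ls"
  have vs: "set vs = V" "distinct vs" "sorted (map x vs)" unfolding vs_def using ls by auto
  interpret c: cater vs x \<alpha> using vs xa(1) by unfold_locales auto
  have I: "real_interval {4}" "{4::real} \<subseteq> {0..}" unfolding real_interval_def by auto
  show ?thesis
  proof (cases "length vs \<ge> 2")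
    case True
    have "is_tree (c.LV (length vs)) (c.LE (length vs)) \<and> (\<forall>e\<in>c.LE (length vs). c.w e \<ge> 0) \<and>
      leaves (c.LV (length vs)) (c.LE (length vs)) = Inl ` V \<and> real_interval {4} \<and> {4::real} \<subseteq> {0..} \<and>
      (\<forall>u\<in>V. \<forall>v\<in>V. u \<noteq> v \<longrightarrow>
            ({u, v} \<in> E \<longleftrightarrow> tree_dist (c.LV (length vs)) (c.LE (length vs)) c.w (Inl u) (Inl v) \<in> {4}))"
      using c.final_tree[OF True] xa(2) I vs(1) by auto
    then show ?thesis unfolding PCG_def using ok
      by (intro conjI exI[of _ "c.LV (length vs)"] exI[of _ "c.LE (length vs)"] exI[of _ c.w] exI[of _ "{4::real}"]) auto
  next
    case False
    then obtain v0 where v: "vs = [v0]" using ne vs(1) by (cases vs; cases "tl vs") auto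
    then have V: "V = {v0}" using vs(1) by simp
    have t: "is_tree {Inl v0} {}" using tree_ok_is_tree[OF tree_ok_single] .
    have l: "leaves {Inl v0 :: 'a + nat} {} = Inl ` V" unfolding leaves_def degree_def V by auto
    have "is_tree {Inl v0 :: 'a + nat} {} \<and> (\<forall>e\<in>{}. (\<lambda>_. 0::real) e \<ge> 0) \<and> leaves {Inl v0 :: 'a + nat} {} = Inl ` V \<and>
      real_interval {4} \<and> {4::real} \<subseteq> {0..} \<and>
      (\<forall>u\<in>V. \<forall>v\<in>V. u \<noteq> v \<longrightarrow> ({u, v} \<in> E \<longleftrightarrow> tree_dist {Inl v0 :: 'a + nat} {} (\<lambda>_. 0) (Inl u) (Inl v) \<in> {4}))"
      using t l I V by auto
    then show ?thesis unfolding PCG_def using ok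
      by (intro conjI exI[of _ "{Inl v0 :: 'a + nat}"] exI[of _ "{} :: ('a + nat) set set"] exI[of _ "\<lambda>_. 0::real"] exI[of _ "{4::real}"]) auto
  qed
qed


definition cX :: "nat \<Rightarrow> nat \<Rightarrow> int" where
  "cX n i = (if i = 0 then 5 else if i < (n + 1) div 2 then 4 * int i
     else if i = (n + 1) div 2 then 2 * int n - 3 else 4 * (int n - int i) + 2)"
definition cA :: "nat \<Rightarrow> nat \<Rightarrow> int" where
  "cA n i = (if i = 0 \<or> i = (n + 1) div 2 then 3 else 0)"

lemma cycle_arith:
  assumes n: "4 \<le> n" and ij: "i < j" "j < n"
  shows "(j = Suc i \<or> (i = 0 \<and> j = n - 1)) \<longleftrightarrow> cA n i + cA n j + \<bar>cX n i - cX n j\<bar> = 4"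
proof -
  define g where "g = (n + 1) div 2"
  have g: "2 \<le> g" "g < n - 1" "2 * g = n \<or> 2 * g = n + 1" unfolding g_def using n by auto
  consider (z) "i = 0" | (a) "0 < i" "i < g" | (m) "i = g" | (b) "g < i" using ij by linarith
  then show ?thesis
  proof cases
    case z
    consider (a) "0 < j" "j < g" | (m) "j = g" | (b) "g < j" using ij z by linarith
    then show ?thesis
    proof cases
      case a then show ?thesis using z g unfolding cX_def cA_def g_def[symmetric] by (auto simp: abs_if; presburger)
    next
      case m then show ?thesis using z g unfolding cX_def cA_def g_def[symmetric] by (auto simp: abs_if; presburger)
    next
      case b then show ?thesis using z g ij unfolding cX_def cA_def g_def[symmetric] by (auto simp: abs_if; presburger)
    qed
  next
    case a
    consider (a) "j < g" | (m) "j = g" | (b) "g < j" using ij by linarith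
    then show ?thesis
    proof cases
      case a then show ?thesis using \<open>0 < i\<close> \<open>i < g\<close> ij g unfolding cX_def cA_def g_def[symmetric] by (auto simp: abs_if; presburger)
    next
      case m then show ?thesis using \<open>0 < i\<close> \<open>i < g\<close> ij g unfolding cX_def cA_def g_def[symmetric] by (auto simp: abs_if; presburger)
    next
      case b
      have "\<bar>4 * int i - (4 * (int n - int j) + 2)\<bar> \<noteq> 4" by presburger
      then show ?thesis using \<open>0 < i\<close> \<open>i < g\<close> ij g b unfolding cX_def cA_def g_def[symmetric] by (auto simp: abs_if; presburger)
    qed
  next
    case m
    then have "g < j" using ij by simp
    then show ?thesis using m ij g unfolding cX_def cA_def g_def[symmetric] by (auto simp: abs_if; presburger)
  next
    case b
    then show ?thesis using ij g unfolding cX_def cA_def g_def[symmetric] by (auto simp: abs_if; presburger)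
  qed
qed


definition maxdeg2 :: "'a set \<Rightarrow> 'a set set \<Rightarrow> bool" where
  "maxdeg2 V E \<longleftrightarrow> (\<forall>v\<in>V. degree V E v \<le> 2)"

definition chain :: "'a set \<Rightarrow> 'a set set \<Rightarrow> 'a list \<Rightarrow> bool" where
  "chain V E p \<longleftrightarrow> p \<noteq> [] \<and> distinct p \<and> set p \<subseteq> V \<and> (\<forall>i. Suc i < length p \<longrightarrow> {p ! i, p ! Suc i} \<in> E)"

lemma edge_in: "graph_edges_ok V E \<Longrightarrow> {u, v} \<in> E \<Longrightarrow> u \<in> V \<and> v \<in> V \<and> u \<noteq> v"
  unfolding graph_edges_ok_def by (metis doubleton_eq_iff)

lemma card_ge3: "finite A \<Longrightarrow> a \<in> A \<Longrightarrow> b \<in> A \<Longrightarrow> c \<in> A \<Longrightarrow> a \<noteq> b \<Longrightarrow> a \<noteq> c \<Longrightarrow> b \<noteq> c \<Longrightarrow> card A \<ge> 3"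
proof -
  assume "finite A" "a \<in> A" "b \<in> A" "c \<in> A" "a \<noteq> b" "a \<noteq> c" "b \<noteq> c"
  then have "card {a, b, c} \<le> card A" by (intro card_mono) auto
  then show ?thesis using \<open>a \<noteq> b\<close> \<open>a \<noteq> c\<close> \<open>b \<noteq> c\<close> by simp
qed

lemma chain_interior:
  assumes ok: "graph_edges_ok V E" and fin: "finite V" and md: "maxdeg2 V E" and ch: "chain V E p"
    and i: "0 < i" "Suc i < length p" and e: "{u, p ! i} \<in> E"
  shows "u = p ! (i - 1) \<or> u = p ! Suc i"
proof (rule ccontr)
  assume nu: "\<not> (u = p ! (i - 1) \<or> u = p ! Suc i)"
  let ?N = "{u \<in> V. {u, p ! i} \<in> E}"
  have c: "distinct p" "set p \<subseteq> V" "\<forall>i. Suc i < length p \<longrightarrow> {p ! i, p ! Suc i} \<in> E"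
    using ch unfolding chain_def by auto
  have si: "Suc (i - 1) = i" using i by simp
  have "Suc (i - 1) < length p" using i by simp
  then have "{p ! (i - 1), p ! Suc (i - 1)} \<in> E" using c(3) by blast
  then have "{p ! (i - 1), p ! i} \<in> E" unfolding si .
  then have 1: "p ! (i - 1) \<in> ?N" using i edge_in[OF ok] by auto
  have "{p ! i, p ! Suc i} \<in> E" using c(3) i by simp
  then have 2: "p ! Suc i \<in> ?N" using edge_in[OF ok] by (auto simp: insert_commute)
  have 3: "u \<in> ?N" using e edge_in[OF ok] by auto
  have "p ! (i - 1) \<noteq> p ! Suc i" using nth_eq_iff_index_eq[OF c(1)] i by auto
  then have "card ?N \<ge> 3" using card_ge3[OF _ 1 2 3] nu fin by auto
  moreover have "p ! i \<in> V" using c(2) i by auto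
  then have "card ?N \<le> 2" using md unfolding maxdeg2_def degree_def by auto
  ultimately show False by simp
qed

lemma chain_structure:
  assumes ok: "graph_edges_ok V E" and fin: "finite V" and md: "maxdeg2 V E" and ch: "chain V E p"
    and hdc: "\<forall>u. {u, hd p} \<in> E \<longrightarrow> u \<in> set p"
    and lastc: "\<forall>u. {u, last p} \<in> E \<longrightarrow> u \<in> set p"
  shows "\<forall>a\<in>set p. \<forall>u. {u, a} \<in> E \<longrightarrow> u \<in> set p"
    and "\<forall>i j. i < j \<longrightarrow> j < length p \<longrightarrow> {p ! i, p ! j} \<in> E \<longrightarrow> j = Suc i \<or> (i = 0 \<and> j = length p - 1)"
proof -
  have c: "p \<noteq> []" "distinct p" "set p \<subseteq> V" using ch unfolding chain_def by auto
  show "\<forall>a\<in>set p. \<forall>u. {u, a} \<in> E \<longrightarrow> u \<in> set p"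
  proof (intro ballI allI impI)
    fix a u assume a: "a \<in> set p" and e: "{u, a} \<in> E"
    then obtain i where i: "i < length p" "a = p ! i" by (auto simp: in_set_conv_nth)
    show "u \<in> set p"
    proof (cases "i = 0")
      case True then show ?thesis using hdc e i c(1) by (simp add: hd_conv_nth)
    next
      case False
      show ?thesis
      proof (cases "Suc i < length p")
        case True
        then have "u = p ! (i - 1) \<or> u = p ! Suc i" using chain_interior[OF ok fin md ch] False e i by auto
        then show ?thesis using True by auto
      next
        case False
        then have "i = length p - 1" using i by simp
        then show ?thesis using lastc e i c(1) by (simp add: last_conv_nth)
      qed
    qed
  qed
  show "\<forall>i j. i < j \<longrightarrow> j < length p \<longrightarrow> {p ! i, p ! j} \<in> E \<longrightarrow> j = Suc i \<or> (i = 0 \<and> j = length p - 1)"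
  proof (intro allI impI)
    fix i j assume ij: "i < j" "j < length p" and e: "{p ! i, p ! j} \<in> E"
    show "j = Suc i \<or> (i = 0 \<and> j = length p - 1)"
    proof (cases "i = 0")
      case False
      have "p ! j = p ! (i - 1) \<or> p ! j = p ! Suc i"
        using chain_interior[OF ok fin md ch, of i "p ! j"] False ij e by (auto simp: insert_commute)
      then show ?thesis using nth_eq_iff_index_eq[OF c(2)] ij by auto
    next
      case True
      show ?thesis
      proof (cases "Suc j < length p")
        case True
        have "p ! i = p ! (j - 1) \<or> p ! i = p ! Suc j"
          using chain_interior[OF ok fin md ch, of j "p ! i"] True ij e by auto
        then show ?thesis using nth_eq_iff_index_eq[OF c(2)] ij True by auto
      next
        case False
        then show ?thesis using \<open>i = 0\<close> ij by auto
      qed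
    qed
  qed
qed

lemma chain_edge: "chain V E p \<Longrightarrow> Suc i < length p \<Longrightarrow> {p ! i, p ! Suc i} \<in> E"
  unfolding chain_def by auto

lemma chain_snoc:
  assumes "chain V E p" "{u, last p} \<in> E" "u \<notin> set p" "u \<in> V"
  shows "chain V E (p @ [u])"
  unfolding chain_def
proof (intro conjI allI impI)
  show "p @ [u] \<noteq> []" by simp
  show "distinct (p @ [u])" "set (p @ [u]) \<subseteq> V" using assms unfolding chain_def by auto
  fix i assume i: "Suc i < length (p @ [u])"
  show "{(p @ [u]) ! i, (p @ [u]) ! Suc i} \<in> E"
  proof (cases "Suc i < length p")
    case True then show ?thesis using assms(1) by (simp add: nth_append chain_def)
  next
    case False
    then have si: "Suc i = length p" using i by simp
    then have "i = length p - 1" by simp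
    then have "(p @ [u]) ! i = last p" "(p @ [u]) ! Suc i = u" using si assms(1) unfolding chain_def
      by (auto simp: nth_append last_conv_nth)
    then show ?thesis using assms(2) by (simp add: insert_commute)
  qed
qed

lemma chain_cons:
  assumes "chain V E p" "{u, hd p} \<in> E" "u \<notin> set p" "u \<in> V"
  shows "chain V E (u # p)"
  unfolding chain_def
proof (intro conjI allI impI)
  show "u # p \<noteq> []" by simp
  show "distinct (u # p)" "set (u # p) \<subseteq> V" using assms unfolding chain_def by auto
  fix i assume i: "Suc i < length (u # p)"
  show "{(u # p) ! i, (u # p) ! Suc i} \<in> E"
  proof (cases i)
    case 0 then show ?thesis using assms(1,2) unfolding chain_def by (auto simp: hd_conv_nth)
  next
    case (Suc k) then show ?thesis using assms(1) i unfolding chain_def by auto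
  qed
qed

lemma chain_length: "finite V \<Longrightarrow> chain V E p \<Longrightarrow> length p < Suc (card V)"
  unfolding chain_def using distinct_card card_mono by (metis less_Suc_eq_le)

lemma longest_chain:
  assumes fin: "finite V" and v: "v \<in> V"
  shows "\<exists>p. chain V E p \<and> (\<forall>q. chain V E q \<longrightarrow> length q \<le> length p)"
proof -
  have "chain V E [v]" using v unfolding chain_def by auto
  then show ?thesis
    using Lattices_Big.ex_has_greatest_nat[of "chain V E" "[v]" length "Suc (card V)"] chain_length[OF fin]
    by blast
qed

lemma longest_chain_from:
  assumes fin: "finite V" and v: "v \<in> V"
  shows "\<exists>p. chain V E p \<and> hd p = v \<and> (\<forall>q. chain V E q \<and> hd q = v \<longrightarrow> length q \<le> length p)"
proof -
  have "chain V E [v] \<and> hd [v] = v" using v unfolding chain_def by auto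
  then show ?thesis
    using Lattices_Big.ex_has_greatest_nat[of "\<lambda>p. chain V E p \<and> hd p = v" "[v]" length "Suc (card V)"] chain_length[OF fin]
    by blast
qed


lemma CR_by_index:
  assumes dist: "distinct p"
    and adj: "\<forall>i<length p. \<forall>j<length p. i \<noteq> j \<longrightarrow> ({p ! i, p ! j} \<in> E \<longleftrightarrow> Al i + Al j + \<bar>X i - X j\<bar> = (4::real))"
    and nn: "\<forall>i. 0 \<le> Al i"
  shows "CR (set p) E"
proof -
  define idx where "idx v = (THE i. i < length p \<and> p ! i = v)" for v
  have idx: "idx (p ! i) = i" if "i < length p" for i
    unfolding idx_def by (rule the_equality) (use that nth_eq_iff_index_eq[OF dist] in auto)
  have "(\<forall>v. 0 \<le> Al (idx v)) \<and> (\<forall>u\<in>set p. \<forall>v\<in>set p. u \<noteq> v \<longrightarrow>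
      ({u, v} \<in> E \<longleftrightarrow> Al (idx u) + Al (idx v) + \<bar>X (idx u) - X (idx v)\<bar> = 4))"
  proof (intro conjI allI ballI impI)
    fix v show "0 \<le> Al (idx v)" using nn by simp
  next
    fix u v assume uv: "u \<in> set p" "v \<in> set p" "u \<noteq> v"
    then obtain i j where ij: "i < length p" "u = p ! i" "j < length p" "v = p ! j"
      by (auto simp: in_set_conv_nth)
    then have "i \<noteq> j" using uv by auto
    then show "{u, v} \<in> E \<longleftrightarrow> Al (idx u) + Al (idx v) + \<bar>X (idx u) - X (idx v)\<bar> = 4"
      using adj ij idx by auto
  qed
  then show ?thesis unfolding CR_def
    by (intro exI[of _ "\<lambda>v. X (idx v)"] exI[of _ "\<lambda>v. Al (idx v)"]) simp
qed

lemma path_arith: "(j = Suc i \<or> i = Suc j) \<longleftrightarrow> \<bar>4 * real i - 4 * real j\<bar> = (4::real)"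
proof (cases "i < j")
  case True
  then have "\<bar>4 * real i - 4 * real j\<bar> = 4 * (real j - real i)" by simp
  then show ?thesis using True by auto
next
  case False
  then have "\<bar>4 * real i - 4 * real j\<bar> = 4 * (real i - real j)" by simp
  then show ?thesis using False by auto
qed

lemma CR_path:
  assumes "distinct p"
    and "\<forall>i<length p. \<forall>j<length p. i \<noteq> j \<longrightarrow> ({p ! i, p ! j} \<in> E \<longleftrightarrow> (j = Suc i \<or> i = Suc j))"
  shows "CR (set p) E"
  by (rule CR_by_index[where Al = "\<lambda>_. 0" and X = "\<lambda>i. 4 * real i"]) (use assms path_arith in auto)

lemma CR_triangle:
  assumes "distinct p" "length p = 3"
    and "\<forall>i<length p. \<forall>j<length p. i \<noteq> j \<longrightarrow> {p ! i, p ! j} \<in> E"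
  shows "CR (set p) E"
  by (rule CR_by_index[where Al = "\<lambda>_. 2" and X = "\<lambda>i. 0"]) (use assms in auto)

lemma cycle_arith_sym:
  assumes n: "4 \<le> n" and ij: "i \<noteq> j" "i < n" "j < n"
  shows "(j = Suc i \<or> i = Suc j \<or> (i = 0 \<and> j = n - 1) \<or> (j = 0 \<and> i = n - 1)) \<longleftrightarrow>
    real_of_int (cA n i) + real_of_int (cA n j) + \<bar>real_of_int (cX n i) - real_of_int (cX n j)\<bar> = 4"
proof -
  have r: "real_of_int (cA n i) + real_of_int (cA n j) + \<bar>real_of_int (cX n i) - real_of_int (cX n j)\<bar> =
     real_of_int (cA n i + cA n j + \<bar>cX n i - cX n j\<bar>)" by simp
  have e: "real_of_int a = 4 \<longleftrightarrow> a = 4" for a by linarith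
  show ?thesis
  proof (cases "i < j")
    case True
    then show ?thesis unfolding r e using cycle_arith[OF n True ij(3)] by auto
  next
    case False
    then have "j < i" using ij by simp
    have "cA n i + cA n j + \<bar>cX n i - cX n j\<bar> = cA n j + cA n i + \<bar>cX n j - cX n i\<bar>"
      by (simp add: abs_minus_commute)
    then show ?thesis unfolding r e using cycle_arith[OF n \<open>j < i\<close> ij(2)] \<open>j < i\<close> by auto
  qed
qed

lemma CR_cycle:
  assumes "distinct p" "4 \<le> length p"
    and "\<forall>i<length p. \<forall>j<length p. i \<noteq> j \<longrightarrow> ({p ! i, p ! j} \<in> E \<longleftrightarrow>
       (j = Suc i \<or> i = Suc j \<or> (i = 0 \<and> j = length p - 1) \<or> (j = 0 \<and> i = length p - 1)))"
  shows "CR (set p) E"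
proof (rule CR_by_index[where Al = "\<lambda>i. real_of_int (cA (length p) i)" and X = "\<lambda>i. real_of_int (cX (length p) i)"])
  show "distinct p" by fact
  show "\<forall>i. 0 \<le> real_of_int (cA (length p) i)" unfolding cA_def by simp
  show "\<forall>i<length p. \<forall>j<length p. i \<noteq> j \<longrightarrow> ({p ! i, p ! j} \<in> E \<longleftrightarrow>
     real_of_int (cA (length p) i) + real_of_int (cA (length p) j) +
     \<bar>real_of_int (cX (length p) i) - real_of_int (cX (length p) j)\<bar> = 4)"
    using assms(3) cycle_arith_sym[OF assms(2)] by auto
qed

lemma CR_empty: "CR {} E"
  unfolding CR_def by (rule exI[of _ "\<lambda>_. 0"], rule exI[of _ "\<lambda>_. 0"]) auto

lemma CR_union:
  assumes fin: "finite V1" "finite V2" and disj: "V1 \<inter> V2 = {}"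
    and ok: "graph_edges_ok V1 E1" "graph_edges_ok V2 E2"
    and cr: "CR V1 E1" "CR V2 E2"
  shows "CR (V1 \<union> V2) (E1 \<union> E2)"
proof -
  obtain x1 a1 where c1: "\<forall>v. 0 \<le> (a1 v :: real)"
    "\<forall>u\<in>V1. \<forall>v\<in>V1. u \<noteq> v \<longrightarrow> ({u, v} \<in> E1 \<longleftrightarrow> a1 u + a1 v + \<bar>(x1 :: 'a \<Rightarrow> real) u - x1 v\<bar> = 4)"
    using cr(1) unfolding CR_def by blast
  obtain x2 a2 where c2: "\<forall>v. 0 \<le> (a2 v :: real)"
    "\<forall>u\<in>V2. \<forall>v\<in>V2. u \<noteq> v \<longrightarrow> ({u, v} \<in> E2 \<longleftrightarrow> a2 u + a2 v + \<bar>(x2 :: 'a \<Rightarrow> real) u - x2 v\<bar> = 4)"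
    using cr(2) unfolding CR_def by blast
  define s where "s = (\<Sum>v\<in>V1. \<bar>x1 v\<bar>) + (\<Sum>v\<in>V2. \<bar>x2 v\<bar>) + 5"
  define x where "x v = (if v \<in> V1 then x1 v else x2 v + s)" for v
  define a where "a v = (if v \<in> V1 then a1 v else a2 v)" for v
  have b1: "\<bar>x1 v\<bar> \<le> (\<Sum>v\<in>V1. \<bar>x1 v\<bar>)" if "v \<in> V1" for v
    using member_le_sum[of v V1 "\<lambda>v. \<bar>x1 v\<bar>"] that fin by auto
  have b2: "\<bar>x2 v\<bar> \<le> (\<Sum>v\<in>V2. \<bar>x2 v\<bar>)" if "v \<in> V2" for v
    using member_le_sum[of v V2 "\<lambda>v. \<bar>x2 v\<bar>"] that fin by auto
  have s0: "0 \<le> (\<Sum>v\<in>V1. \<bar>x1 v\<bar>)" "0 \<le> (\<Sum>v\<in>V2. \<bar>x2 v\<bar>)" by (auto intro: sum_nonneg)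
  have cross: "{u, v} \<notin> E1 \<union> E2 \<and> a u + a v + \<bar>x u - x v\<bar> \<noteq> 4" if uv: "u \<in> V1" "v \<in> V2" for u v
  proof
    have "v \<notin> V1" "u \<notin> V2" using uv disj by auto
    then show "{u, v} \<notin> E1 \<union> E2" using edge_in[OF ok(1), of u v] edge_in[OF ok(2), of u v] by auto
    have "x u = x1 u" "x v = x2 v + s" "a u = a1 u" "a v = a2 v"
      using uv \<open>v \<notin> V1\<close> unfolding x_def a_def by auto
    moreover have "\<bar>x1 u - (x2 v + s)\<bar> \<ge> 5" using b1[OF uv(1)] b2[OF uv(2)] s0 unfolding s_def by linarith
    ultimately show "a u + a v + \<bar>x u - x v\<bar> \<noteq> 4" using c1(1) c2(1)[rule_format, of v] c1(1)[rule_format, of u] by linarith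
  qed
  have "(\<forall>v. 0 \<le> a v) \<and> (\<forall>u\<in>V1 \<union> V2. \<forall>v\<in>V1 \<union> V2. u \<noteq> v \<longrightarrow>
      ({u, v} \<in> E1 \<union> E2 \<longleftrightarrow> a u + a v + \<bar>x u - x v\<bar> = 4))"
  proof (intro conjI allI ballI impI)
    fix v show "0 \<le> a v" unfolding a_def using c1(1) c2(1) by auto
  next
    fix u v assume u: "u \<in> V1 \<union> V2" and v: "v \<in> V1 \<union> V2" and uv: "u \<noteq> v"
    show "{u, v} \<in> E1 \<union> E2 \<longleftrightarrow> a u + a v + \<bar>x u - x v\<bar> = 4"
    proof (cases "u \<in> V1")
      case u1: True
      show ?thesis
      proof (cases "v \<in> V1")
        case True
        have "{u, v} \<notin> E2" using edge_in[OF ok(2), of u v] u1 disj by auto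
        then show ?thesis using c2 c1(2) u1 True uv unfolding x_def a_def by auto
      next
        case False
        then show ?thesis using cross[OF u1, of v] v by auto
      qed
    next
      case u2: False
      then have u2': "u \<in> V2" using u by simp
      show ?thesis
      proof (cases "v \<in> V1")
        case True
        have "{v, u} \<notin> E1 \<union> E2 \<and> a v + a u + \<bar>x v - x u\<bar> \<noteq> 4" using cross[OF True u2'] .
        then show ?thesis by (simp add: insert_commute abs_minus_commute add.commute)
      next
        case False
        then have v2: "v \<in> V2" using v by simp
        have "{u, v} \<notin> E1" using edge_in[OF ok(1), of u v] u2 by auto
        moreover have "x u - x v = x2 u - x2 v" "a u = a2 u" "a v = a2 v"
          unfolding x_def a_def using u2 False by auto
        ultimately show ?thesis using c2(2) u2' v2 uv by auto
      qed
    qed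
  qed
  then show ?thesis unfolding CR_def by (intro exI[of _ x] exI[of _ a]) simp
qed


lemma degree_sub:
  assumes "finite V" "V2 \<subseteq> V" "E2 \<subseteq> E"
  shows "degree V2 E2 v \<le> degree V E v"
  unfolding degree_def by (rule card_mono) (use assms in auto)

lemma maxdeg2_CR:
  assumes "finite V" "graph_edges_ok V E" "maxdeg2 V E"
  shows "CR V E"
  using assms
proof (induction "card V" arbitrary: V E rule: less_induct)
  case less
  note fin = less.prems(1) and ok = less.prems(2) and md = less.prems(3)
  show ?case
  proof (cases "V = {}")
    case True then show ?thesis using CR_empty by simp
  next
    case False
    then obtain v where "v \<in> V" by blast
    obtain p where ch: "chain V E p" and lg: "\<forall>q. chain V E q \<longrightarrow> length q \<le> length p"
      using longest_chain[OF fin \<open>v \<in> V\<close>] by blast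
    have pc: "p \<noteq> []" "distinct p" "set p \<subseteq> V" using ch unfolding chain_def by auto
    have hdc: "\<forall>u. {u, hd p} \<in> E \<longrightarrow> u \<in> set p"
    proof (intro allI impI)
      fix u assume e: "{u, hd p} \<in> E"
      show "u \<in> set p"
      proof (rule ccontr)
        assume "u \<notin> set p"
        then have "chain V E (u # p)" using chain_cons[OF ch e] edge_in[OF ok e] by auto
        then have "length (u # p) \<le> length p" using lg by blast
        then show False by simp
      qed
    qed
    have lastc: "\<forall>u. {u, last p} \<in> E \<longrightarrow> u \<in> set p"
    proof (intro allI impI)
      fix u assume e: "{u, last p} \<in> E"
      show "u \<in> set p"
      proof (rule ccontr)
        assume "u \<notin> set p"
        then have "chain V E (p @ [u])" using chain_snoc[OF ch e] edge_in[OF ok e] by auto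
        then have "length (p @ [u]) \<le> length p" using lg by blast
        then show False by simp
      qed
    qed
    note st = chain_structure[OF ok fin md ch hdc lastc]
    let ?S = "set p" and ?n = "length p"
    define E1 where "E1 = {e \<in> E. e \<subseteq> ?S}"
    define V2 where "V2 = V - ?S"
    define E2 where "E2 = {e \<in> E. e \<subseteq> V2}"
    have EU: "E = E1 \<union> E2"
    proof
      show "E \<subseteq> E1 \<union> E2"
      proof
        fix e assume e: "e \<in> E"
        then obtain a b where ab: "e = {a, b}" "a \<in> V" "b \<in> V" using ok unfolding graph_edges_ok_def by blast
        show "e \<in> E1 \<union> E2"
        proof (cases "a \<in> ?S \<or> b \<in> ?S")
          case True
          have e1: "{b, a} \<in> E" "{a, b} \<in> E" using e ab by (auto simp: insert_commute)
          have "a \<in> ?S \<Longrightarrow> b \<in> ?S" using st(1) e1(1) by blast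
          moreover have "b \<in> ?S \<Longrightarrow> a \<in> ?S" using st(1) e1(2) by blast
          ultimately have "a \<in> ?S" "b \<in> ?S" using True by blast+
          then show ?thesis unfolding E1_def using e ab by auto
        next
          case False
          then show ?thesis unfolding E2_def V2_def using e ab by auto
        qed
      qed
      show "E1 \<union> E2 \<subseteq> E" unfolding E1_def E2_def by auto
    qed
    have okS: "graph_edges_ok W {e \<in> E. e \<subseteq> W}" for W
      unfolding graph_edges_ok_def
    proof
      fix e assume e: "e \<in> {e \<in> E. e \<subseteq> W}"
      then have "e \<in> E" "e \<subseteq> W" by auto
      then obtain u v where "e = {u, v}" "u \<noteq> v" using ok unfolding graph_edges_ok_def by blast
      then show "\<exists>u v. e = {u, v} \<and> u \<in> W \<and> v \<in> W \<and> u \<noteq> v" using \<open>e \<subseteq> W\<close> by blast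
    qed
    have ok1: "graph_edges_ok ?S E1" unfolding E1_def by (rule okS)
    have ok2: "graph_edges_ok V2 E2" unfolding E2_def by (rule okS)
    have V2: "V2 \<subseteq> V" "E2 \<subseteq> E" unfolding V2_def E2_def by auto
    have md2: "maxdeg2 V2 E2" unfolding maxdeg2_def
    proof
      fix w assume "w \<in> V2"
      then have "w \<in> V" using V2 by auto
      then have "degree V E w \<le> 2" using md unfolding maxdeg2_def by auto
      then show "degree V2 E2 w \<le> 2" using degree_sub[OF fin V2, of w] by simp
    qed
    have "card V2 < card V"
    proof -
      have "hd p \<in> ?S" using pc by simp
      then have "V2 \<subset> V" unfolding V2_def using pc by blast
      then show ?thesis using fin by (simp add: psubset_card_mono)
    qed
    have fV2: "finite V2" using finite_subset[OF V2(1) fin] .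
    have cr2: "CR V2 E2" by (rule less.hyps[OF \<open>card V2 < card V\<close> fV2 ok2 md2])
    have E1E: "{p ! i, p ! j} \<in> E1 \<longleftrightarrow> {p ! i, p ! j} \<in> E" if "i < ?n" "j < ?n" for i j
      unfolding E1_def using that by auto
    define cl where "cl = ({p ! 0, p ! (?n - 1)} \<in> E)"
    have adj: "{p ! i, p ! j} \<in> E \<longleftrightarrow> (j = Suc i \<or> (i = 0 \<and> j = ?n - 1 \<and> cl))"
      if ij: "i < j" "j < ?n" for i j
    proof
      assume "{p ! i, p ! j} \<in> E"
      then show "j = Suc i \<or> (i = 0 \<and> j = ?n - 1 \<and> cl)" using st(2) ij unfolding cl_def by blast
    next
      assume "j = Suc i \<or> (i = 0 \<and> j = ?n - 1 \<and> cl)"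
      then show "{p ! i, p ! j} \<in> E" using chain_edge[OF ch, of i] ij unfolding cl_def by auto
    qed
    have adjs: "{p ! i, p ! j} \<in> E1 \<longleftrightarrow> (j = Suc i \<or> i = Suc j \<or> (i = 0 \<and> j = ?n - 1 \<and> cl) \<or> (j = 0 \<and> i = ?n - 1 \<and> cl))"
      if ij: "i \<noteq> j" "i < ?n" "j < ?n" for i j
    proof (cases "i < j")
      case True then show ?thesis using adj[OF True ij(3)] E1E ij by auto
    next
      case False
      then have "j < i" using ij by simp
      have "{p ! i, p ! j} = {p ! j, p ! i}" by (rule insert_commute)
      then show ?thesis using adj[OF \<open>j < i\<close> ij(2)] E1E[OF ij(3) ij(2)] \<open>j < i\<close> by auto
    qed
    have cr1: "CR ?S E1"
    proof (cases "cl \<and> 4 \<le> ?n")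
      case True
      show ?thesis
      proof (rule CR_cycle[OF pc(2) conjunct2[OF True]], intro allI impI)
        fix i j assume ij: "i < ?n" "j < ?n" "i \<noteq> j"
        show "{p ! i, p ! j} \<in> E1 \<longleftrightarrow> (j = Suc i \<or> i = Suc j \<or> (i = 0 \<and> j = ?n - 1) \<or> (j = 0 \<and> i = ?n - 1))"
          using adjs[OF ij(3) ij(1) ij(2)] True by simp
      qed
    next
      case False
      show ?thesis
      proof (cases "cl \<and> ?n = 3")
        case True
        show ?thesis
        proof (rule CR_triangle[OF pc(2) conjunct2[OF True]], intro allI impI)
          fix i j assume ij: "i < ?n" "j < ?n" "i \<noteq> j"
          show "{p ! i, p ! j} \<in> E1"
            using adjs[OF ij(3) ij(1) ij(2)] True ij by auto
        qed
      next
        case False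
        have "\<forall>i<?n. \<forall>j<?n. i \<noteq> j \<longrightarrow> ({p ! i, p ! j} \<in> E1 \<longleftrightarrow> (j = Suc i \<or> i = Suc j))"
        proof (intro allI impI)
          fix i j assume ij: "i < ?n" "j < ?n" "i \<noteq> j"
          have "\<not> cl \<or> ?n \<le> 2" using False \<open>\<not> (cl \<and> 4 \<le> ?n)\<close> by auto
          then show "{p ! i, p ! j} \<in> E1 \<longleftrightarrow> (j = Suc i \<or> i = Suc j)" using adjs[OF ij(3) ij(1) ij(2)] ij by auto
        qed
        then show ?thesis by (rule CR_path[OF pc(2)])
      qed
    qed
    have "V = ?S \<union> V2" unfolding V2_def using pc by auto
    moreover have "?S \<inter> V2 = {}" unfolding V2_def by auto
    moreover have "CR (?S \<union> V2) (E1 \<union> E2)" by (rule CR_union[OF _ fV2 _ ok1 ok2 cr1 cr2]) (auto simp: V2_def)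
    ultimately show ?thesis using EU by simp
  qed
qed

theorem maxdeg2_PCG:
  assumes "finite V" "V \<noteq> {}" "graph_edges_ok V E" "maxdeg2 V E"
  shows "PCG V E"
  using CR_PCG maxdeg2_CR assms by blast


definition orient :: "'a set \<Rightarrow> 'a set set \<Rightarrow> ('a \<times> 'a) set \<Rightarrow> bool" where
  "orient V E R \<longleftrightarrow> R \<subseteq> V \<times> V \<and> (\<forall>a b. (a, b) \<in> R \<longrightarrow> {a, b} \<in> E) \<and>
     (\<forall>e\<in>E. \<exists>a b. e = {a, b} \<and> (a, b) \<in> R) \<and> (\<forall>a b. (a, b) \<in> R \<longrightarrow> (b, a) \<notin> R)"

definition outd :: "('a \<times> 'a) set \<Rightarrow> 'a \<Rightarrow> nat" where "outd R z = card {c. (z, c) \<in> R}"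
definition ind :: "('a \<times> 'a) set \<Rightarrow> 'a \<Rightarrow> nat" where "ind R z = card {c. (c, z) \<in> R}"
definition D :: "('a \<times> 'a) set \<Rightarrow> 'a \<Rightarrow> int" where "D R z = int (outd R z) - int (ind R z)"

definition rev_arc :: "('a \<times> 'a) set \<Rightarrow> 'a \<Rightarrow> 'a \<Rightarrow> ('a \<times> 'a) set" where
  "rev_arc R a b = insert (b, a) (R - {(a, b)})"

lemma orient_sub: "orient V E R \<Longrightarrow> R \<subseteq> V \<times> V"
  unfolding orient_def by simp
lemma orient_edge: "orient V E R \<Longrightarrow> (a, b) \<in> R \<Longrightarrow> {a, b} \<in> E"
  unfolding orient_def by simp
lemma orient_cover: "orient V E R \<Longrightarrow> e \<in> E \<Longrightarrow> \<exists>a b. e = {a, b} \<and> (a, b) \<in> R"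
  unfolding orient_def by simp
lemma orient_anti: "orient V E R \<Longrightarrow> (a, b) \<in> R \<Longrightarrow> (b, a) \<notin> R"
  unfolding orient_def by blast

lemma orient_finite: "finite V \<Longrightarrow> orient V E R \<Longrightarrow> finite R"
  unfolding orient_def by (meson finite_SigmaI finite_subset)

lemma orient_irrefl: "orient V E R \<Longrightarrow> (a, a) \<notin> R"
  unfolding orient_def by blast

lemma rev_arc_orient:
  assumes o: "orient V E R" and ab: "(a, b) \<in> R"
  shows "orient V E (rev_arc R a b)"
proof -
  have R: "R \<subseteq> V \<times> V" "\<forall>a b. (a, b) \<in> R \<longrightarrow> {a, b} \<in> E" "\<forall>e\<in>E. \<exists>a b. e = {a, b} \<and> (a, b) \<in> R"
    "\<forall>a b. (a, b) \<in> R \<longrightarrow> (b, a) \<notin> R" using o unfolding orient_def by auto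
  have ne: "a \<noteq> b" using orient_irrefl[OF o] ab by auto
  show ?thesis unfolding orient_def rev_arc_def
  proof (intro conjI allI impI ballI)
    show "insert (b, a) (R - {(a, b)}) \<subseteq> V \<times> V" using R(1) ab by auto
  next
    fix x y assume "(x, y) \<in> insert (b, a) (R - {(a, b)})"
    then show "{x, y} \<in> E" using R(2) ab by (auto simp: insert_commute)
  next
    fix e assume "e \<in> E"
    then obtain x y where xy: "e = {x, y}" "(x, y) \<in> R" using R(3) by blast
    show "\<exists>x y. e = {x, y} \<and> (x, y) \<in> insert (b, a) (R - {(a, b)})"
    proof (cases "(x, y) = (a, b)")
      case True then show ?thesis using xy by (auto simp: insert_commute)
    next
      case False then show ?thesis using xy by blast
    qed
  next
    fix x y assume "(x, y) \<in> insert (b, a) (R - {(a, b)})"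
    then show "(y, x) \<notin> insert (b, a) (R - {(a, b)})" using R(4) ab by auto
  qed
qed

lemma rev_arc_D:
  assumes o: "orient V E R" and fin: "finite V" and ab: "(a, b) \<in> R"
  shows "D (rev_arc R a b) z = D R z - (if z = a then 2 else 0) + (if z = b then 2 else 0)"
proof -
  have fR: "finite R" using orient_finite[OF fin o] .
  have fo: "finite {c. (z, c) \<in> R}" for z
  proof (rule finite_subset[OF _ finite_imageI[OF fR, of snd]])
    show "{c. (z, c) \<in> R} \<subseteq> snd ` R"
    proof
      fix c assume "c \<in> {c. (z, c) \<in> R}"
      then show "c \<in> snd ` R" by (intro image_eqI[where x="(z, c)"]) auto
    qed
  qed
  have fi: "finite {c. (c, z) \<in> R}" for z
  proof (rule finite_subset[OF _ finite_imageI[OF fR, of fst]])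
    show "{c. (c, z) \<in> R} \<subseteq> fst ` R"
    proof
      fix c assume "c \<in> {c. (c, z) \<in> R}"
      then show "c \<in> fst ` R" by (intro image_eqI[where x="(c, z)"]) auto
    qed
  qed
  have ne: "a \<noteq> b" using orient_irrefl[OF o] ab by auto
  have ba: "(b, a) \<notin> R" using o ab unfolding orient_def by blast
  let ?R = "rev_arc R a b"
  show ?thesis
  proof (cases "z = a")
    case True
    have s1: "{c. (a, c) \<in> ?R} = {c. (a, c) \<in> R} - {b}" unfolding rev_arc_def using ne by auto
    have bm: "b \<in> {c. (a, c) \<in> R}" using ab by simp
    have c1: "card ({c. (a, c) \<in> R} - {b}) = card {c. (a, c) \<in> R} - 1" by (rule card_Diff_singleton[OF bm])
    have c2: "0 < card {c. (a, c) \<in> R}" by (rule card_gt_0_iff[THEN iffD2]) (use fo bm in blast)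
    have o1: "outd ?R a = outd R a - 1" "outd R a \<ge> 1" unfolding outd_def s1 c1 using c2 by auto
    have s2: "{c. (c, a) \<in> ?R} = insert b {c. (c, a) \<in> R}" unfolding rev_arc_def using ne by auto
    have bn: "b \<notin> {c. (c, a) \<in> R}" using ba by simp
    have i1: "ind ?R a = ind R a + 1" unfolding ind_def s2 using card_insert_disjoint[OF fi bn] by simp
    show ?thesis using True ne o1 i1 unfolding D_def by simp
  next
    case za: False
    show ?thesis
    proof (cases "z = b")
      case True
      have s2: "{c. (b, c) \<in> ?R} = insert a {c. (b, c) \<in> R}" unfolding rev_arc_def using ne by auto
      have an: "a \<notin> {c. (b, c) \<in> R}" using ba by simp
      have o1: "outd ?R b = outd R b + 1" unfolding outd_def s2 using card_insert_disjoint[OF fo an] by simp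
      have s1: "{c. (c, b) \<in> ?R} = {c. (c, b) \<in> R} - {a}" unfolding rev_arc_def using ne by auto
      have am: "a \<in> {c. (c, b) \<in> R}" using ab by simp
      have c1: "card ({c. (c, b) \<in> R} - {a}) = card {c. (c, b) \<in> R} - 1" by (rule card_Diff_singleton[OF am])
      have c2: "0 < card {c. (c, b) \<in> R}" by (rule card_gt_0_iff[THEN iffD2]) (use fi am in blast)
      have i1: "ind ?R b = ind R b - 1" "ind R b \<ge> 1" unfolding ind_def s1 c1 using c2 by auto
      show ?thesis using True ne o1 i1 unfolding D_def by simp
    next
      case False
      have "{c. (z, c) \<in> ?R} = {c. (z, c) \<in> R}" "{c. (c, z) \<in> ?R} = {c. (c, z) \<in> R}"
        unfolding rev_arc_def using za False by auto
      then show ?thesis using za False unfolding D_def outd_def ind_def by simp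
    qed
  qed
qed

lemma rtrancl_path_mono_on:
  "rtrancl_path r x xs y \<Longrightarrow> (\<forall>a\<in>set (x # xs). \<forall>b\<in>set (x # xs). r a b \<longrightarrow> r' a b) \<Longrightarrow> rtrancl_path r' x xs y"
proof (induction rule: rtrancl_path.induct)
  case (base x) show ?case by (rule rtrancl_path.base)
next
  case (step x y ys z)
  have "r' x y" using step by auto
  moreover have "rtrancl_path r' y ys z" using step by auto
  ultimately show ?case by (rule rtrancl_path.step)
qed

lemma reverse_path:
  assumes fin: "finite V"
  shows "orient V E R \<Longrightarrow> rtrancl_path (\<lambda>a b. (a, b) \<in> R) u qs w \<Longrightarrow> distinct (u # qs) \<Longrightarrow>
    \<exists>R'. orient V E R' \<and> (\<forall>z. D R' z = D R z - (if z = u then 2 else 0) + (if z = w then 2 else 0))"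
proof (induction qs arbitrary: R u)
  case Nil
  then have "u = w" by (auto elim: rtrancl_path.cases)
  then show ?case using Nil by auto
next
  case (Cons y ys)
  from Cons.prems(2) have uy: "(u, y) \<in> R" and p: "rtrancl_path (\<lambda>a b. (a, b) \<in> R) y ys w"
    by (auto elim: rtrancl_path.cases)
  let ?R1 = "rev_arc R u y"
  have o1: "orient V E ?R1" using rev_arc_orient[OF Cons.prems(1) uy] .
  have p1: "rtrancl_path (\<lambda>a b. (a, b) \<in> ?R1) y ys w"
  proof (rule rtrancl_path_mono_on[OF p], intro ballI impI)
    fix a b assume "a \<in> set (y # ys)" "b \<in> set (y # ys)" "(a, b) \<in> R"
    then have "a \<noteq> u" using Cons.prems(3) by auto
    then show "(a, b) \<in> ?R1" using \<open>(a, b) \<in> R\<close> unfolding rev_arc_def by auto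
  qed
  obtain R' where R': "orient V E R'" "\<forall>z. D R' z = D ?R1 z - (if z = y then 2 else 0) + (if z = w then 2 else 0)"
    using Cons.IH[OF o1 p1] Cons.prems(3) by auto
  have "\<forall>z. D R' z = D R z - (if z = u then 2 else 0) + (if z = w then 2 else 0)"
    using R'(2) rev_arc_D[OF Cons.prems(1) fin uy] by simp
  then show ?case using R'(1) by blast
qed


definition Phi :: "'a set \<Rightarrow> ('a \<times> 'a) set \<Rightarrow> int" where
  "Phi V R = (\<Sum>z\<in>V. (D R z)\<^sup>2)"

lemma exists_orient:
  assumes ok: "graph_edges_ok V E"
  shows "\<exists>R. orient V E R"
proof -
  define pick where "pick e = (SOME ab. e = {fst ab, snd ab} \<and> fst ab \<noteq> snd ab \<and> fst ab \<in> V \<and> snd ab \<in> V)" for e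
  have pk: "e = {fst (pick e), snd (pick e)} \<and> fst (pick e) \<noteq> snd (pick e) \<and> fst (pick e) \<in> V \<and> snd (pick e) \<in> V"
    if eE: "e \<in> E" for e
  proof -
    obtain u v where "e = {u, v}" "u \<in> V" "v \<in> V" "u \<noteq> v" using ok eE unfolding graph_edges_ok_def by blast
    then have "\<exists>ab. e = {fst ab, snd ab} \<and> fst ab \<noteq> snd ab \<and> fst ab \<in> V \<and> snd ab \<in> V"
      by (intro exI[of _ "(u, v)"]) simp
    then show ?thesis unfolding pick_def by (rule someI_ex)
  qed
  have pk2: "e = {a, b} \<and> a \<noteq> b \<and> a \<in> V \<and> b \<in> V" if "e \<in> E" "(a, b) = pick e" for e a b
  proof -
    have "fst (pick e) = a" "snd (pick e) = b" using that(2) by (metis fst_conv, metis snd_conv)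
    then show ?thesis using pk[OF that(1)] by simp
  qed
  have "orient V E (pick ` E)"
    unfolding orient_def
  proof (intro conjI allI impI ballI)
    show "pick ` E \<subseteq> V \<times> V"
    proof
      fix ab assume "ab \<in> pick ` E"
      then obtain e where e: "e \<in> E" "ab = pick e" by blast
      obtain a b where ab: "ab = (a, b)" by (cases ab)
      then show "ab \<in> V \<times> V" using pk2[OF e(1), of a b] e(2) by simp
    qed
  next
    fix a b assume "(a, b) \<in> pick ` E"
    then obtain e where "e \<in> E" "(a, b) = pick e" by blast
    then show "{a, b} \<in> E" using pk2 by blast
  next
    fix e assume e: "e \<in> E"
    obtain a b where ab: "pick e = (a, b)" by (cases "pick e")
    then have "e = {a, b}" using pk2[OF e, of a b] by simp
    moreover have "(a, b) \<in> pick ` E" using ab e by (metis imageI)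
    ultimately show "\<exists>a b. e = {a, b} \<and> (a, b) \<in> pick ` E" by blast
  next
    fix a b assume ab: "(a, b) \<in> pick ` E"
    show "(b, a) \<notin> pick ` E"
    proof
      assume ba: "(b, a) \<in> pick ` E"
      obtain e where e: "e \<in> E" "(a, b) = pick e" using ab by blast
      obtain e' where e': "e' \<in> E" "(b, a) = pick e'" using ba by blast
      have 1: "e = {a, b}" "a \<noteq> b" using pk2[OF e] by auto
      have 2: "e' = {b, a}" using pk2[OF e'] by auto
      have "e = e'" using 1 2 by (simp add: insert_commute)
      then have "(a, b) = (b, a)" using e(2) e'(2) by simp
      then show False using 1(2) by simp
    qed
  qed
  then show ?thesis by blast
qed

lemma orient_converse:
  assumes o: "orient V E R" shows "orient V E (converse R)"
proof -
  have R: "R \<subseteq> V \<times> V" "\<forall>a b. (a, b) \<in> R \<longrightarrow> {a, b} \<in> E" "\<forall>e\<in>E. \<exists>a b. e = {a, b} \<and> (a, b) \<in> R"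
    "\<forall>a b. (a, b) \<in> R \<longrightarrow> (b, a) \<notin> R" using o unfolding orient_def by auto
  show ?thesis unfolding orient_def
  proof (intro conjI allI impI ballI)
    show "converse R \<subseteq> V \<times> V" using R(1) by auto
  next
    fix a b assume "(a, b) \<in> converse R"
    then have "(b, a) \<in> R" by simp
    then have "{b, a} \<in> E" using R(2) by blast
    then show "{a, b} \<in> E" by (simp add: insert_commute)
  next
    fix e assume "e \<in> E"
    then obtain a b where "e = {a, b}" "(a, b) \<in> R" using R(3) by blast
    then show "\<exists>a b. e = {a, b} \<and> (a, b) \<in> converse R" by (intro exI[of _ b] exI[of _ a]) (auto simp: insert_commute)
  next
    fix a b assume "(a, b) \<in> converse R"
    then have "(b, a) \<in> R" by simp
    then have "(a, b) \<notin> R" using R(4) by blast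
    then show "(b, a) \<notin> converse R" by simp
  qed
qed

lemma D_converse: "D (converse R) z = - D R z"
  unfolding D_def outd_def ind_def by simp

lemma Phi_converse: "Phi V (converse R) = Phi V R"
  unfolding Phi_def D_converse by simp

lemma orient_out_fin: "finite V \<Longrightarrow> orient V E R \<Longrightarrow> finite {c. (z, c) \<in> R}"
  by (rule finite_subset[of _ V]) (auto dest: orient_sub)

lemma orient_in_fin: "finite V \<Longrightarrow> orient V E R \<Longrightarrow> finite {c. (c, z) \<in> R}"
  by (rule finite_subset[of _ V]) (auto dest: orient_sub)

lemma reach_neg:
  assumes fin: "finite V" and o: "orient V E R" and u: "u \<in> V" and pos: "D R u > 0"
  shows "\<exists>w. (\<lambda>a b. (a, b) \<in> R)\<^sup>*\<^sup>* u w \<and> w \<in> V \<and> D R w < 0"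
proof (rule ccontr)
  assume na: "\<not> ?thesis"
  let ?r = "\<lambda>a b. (a, b) \<in> R"
  define Rch where "Rch = {w. ?r\<^sup>*\<^sup>* u w}"
  have RV: "R \<subseteq> V \<times> V" using orient_sub[OF o] .
  have sub: "Rch \<subseteq> V"
  proof
    fix w assume "w \<in> Rch"
    then have "?r\<^sup>*\<^sup>* u w" unfolding Rch_def by simp
    then show "w \<in> V"
    proof (induction rule: rtranclp_induct)
      case base then show ?case using u by simp
    next
      case (step y z) then show ?case using RV by auto
    qed
  qed
  then have fR: "finite Rch" using fin finite_subset by blast
  have closed: "c \<in> Rch" if "w \<in> Rch" "(w, c) \<in> R" for w c
    using that unfolding Rch_def by (auto intro: rtranclp.rtrancl_into_rtrancl)
  have fo: "\<forall>w\<in>Rch. finite {c. (w, c) \<in> R}" using orient_out_fin[OF fin o] by blast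
  have fi: "\<forall>w\<in>Rch. finite {c. (c, w) \<in> R}" using orient_in_fin[OF fin o] by blast
  let ?S1 = "SIGMA w:Rch. {c. (w, c) \<in> R}" and ?S2 = "SIGMA w:Rch. {c. (c, w) \<in> R}"
  have s1: "(\<Sum>w\<in>Rch. outd R w) = card ?S1" unfolding outd_def using card_SigmaI[OF fR fo] by simp
  have s2: "(\<Sum>w\<in>Rch. ind R w) = card ?S2" unfolding ind_def using card_SigmaI[OF fR fi] by simp
  have fS2: "finite ?S2" using fR fi by (intro finite_SigmaI) auto
  have "card ?S1 \<le> card ?S2"
  proof (rule card_inj_on_le[of "\<lambda>(w, c). (c, w)"])
    show "inj_on (\<lambda>(w, c). (c, w)) ?S1" by (auto simp: inj_on_def)
    show "(\<lambda>(w, c). (c, w)) ` ?S1 \<subseteq> ?S2" using closed by auto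
    show "finite ?S2" by fact
  qed
  then have le: "(\<Sum>w\<in>Rch. D R w) \<le> 0"
    unfolding D_def sum_subtractf using s1 s2 by (simp del: of_nat_sum add: of_nat_sum[symmetric])
  have uR: "u \<in> Rch" unfolding Rch_def by simp
  have nn: "\<forall>w\<in>Rch. 0 \<le> D R w" using na sub unfolding Rch_def by force
  have "D R u \<le> (\<Sum>w\<in>Rch. D R w)" using member_le_sum[OF uR, of "D R"] nn fR by auto
  then show False using le pos by simp
qed

lemma Phi_change:
  assumes fin: "finite V" and uw: "u \<in> V" "w \<in> V" "u \<noteq> w"
    and g: "\<forall>z. g z = f z - (if z = u then 2 else 0) + (if z = w then 2 else (0::int))"
  shows "(\<Sum>z\<in>V. (g z)\<^sup>2) = (\<Sum>z\<in>V. (f z)\<^sup>2) + (4 - 4 * f u) + (4 * f w + 4)"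
proof -
  have pt: "(g z)\<^sup>2 = (f z)\<^sup>2 + (if z = u then 4 - 4 * f u else 0) + (if z = w then 4 * f w + 4 else 0)" for z
  proof -
    have gz: "g z = f z - (if z = u then 2 else 0) + (if z = w then 2 else 0)" using g by blast
    show ?thesis
    proof (cases "z = u")
      case True
      then have g1: "g z = f u - 2" and "z \<noteq> w" using gz uw(3) by auto
      show ?thesis unfolding g1 using True \<open>z \<noteq> w\<close> by (simp add: power2_eq_square algebra_simps)
    next
      case False
      show ?thesis
      proof (cases "z = w")
        case True
        then have g1: "g z = f w + 2" using gz False by auto
        show ?thesis unfolding g1 using True False by (simp add: power2_eq_square algebra_simps)
      next
        case False
        then show ?thesis using gz \<open>z \<noteq> u\<close> by simp
      qed
    qed
  qed
  have "(\<Sum>z\<in>V. (g z)\<^sup>2) = (\<Sum>z\<in>V. (f z)\<^sup>2) + (\<Sum>z\<in>V. (if z = u then 4 - 4 * f u else 0)) +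
      (\<Sum>z\<in>V. (if z = w then 4 * f w + 4 else 0))"
    unfolding pt by (simp add: sum.distrib)
  also have "\<dots> = (\<Sum>z\<in>V. (f z)\<^sup>2) + (4 - 4 * f u) + (4 * f w + 4)"
    using fin uw by (simp add: sum.delta)
  finally show ?thesis .
qed

lemma min_bal:
  assumes fin: "finite V" and o: "orient V E R" and mn: "\<forall>R'. orient V E R' \<longrightarrow> Phi V R \<le> Phi V R'"
  shows "\<forall>u\<in>V. D R u \<le> 1"
proof (rule ccontr)
  assume "\<not> (\<forall>u\<in>V. D R u \<le> 1)"
  then obtain u where u: "u \<in> V" "D R u \<ge> 2" by force
  obtain w where w: "(\<lambda>a b. (a, b) \<in> R)\<^sup>*\<^sup>* u w" "w \<in> V" "D R w < 0"
    using reach_neg[OF fin o u(1)] u(2) by auto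
  obtain xs where "rtrancl_path (\<lambda>a b. (a, b) \<in> R) u xs w" using w(1) rtranclp_eq_rtrancl_path by metis
  then obtain xs' where p: "rtrancl_path (\<lambda>a b. (a, b) \<in> R) u xs' w" "distinct (u # xs')"
    by (rule rtrancl_path_distinct)
  obtain R' where R': "orient V E R'" "\<forall>z. D R' z = D R z - (if z = u then 2 else 0) + (if z = w then 2 else 0)"
    using reverse_path[OF fin o p] by blast
  have "u \<noteq> w" using u w by auto
  have "Phi V R' = Phi V R + (4 - 4 * D R u) + (4 * D R w + 4)"
    unfolding Phi_def by (rule Phi_change[OF fin u(1) w(2) \<open>u \<noteq> w\<close> R'(2)])
  then have "Phi V R' < Phi V R" using u w by simp
  then show False using mn R'(1) by force
qed

lemma balanced_orient:
  assumes fin: "finite V" and ok: "graph_edges_ok V E"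
  shows "\<exists>R. orient V E R \<and> (\<forall>z\<in>V. \<bar>D R z\<bar> \<le> 1)"
proof -
  obtain R0 where "orient V E R0" using exists_orient[OF ok] by blast
  then obtain R where R: "orient V E R" "\<forall>R'. orient V E R' \<longrightarrow> nat (Phi V R) \<le> nat (Phi V R')"
    using ex_has_least_nat[of "orient V E" R0 "\<lambda>R. nat (Phi V R)"] by blast
  have nn: "0 \<le> Phi V R'" for R' unfolding Phi_def by (simp add: sum_nonneg)
  have mn: "\<forall>R'. orient V E R' \<longrightarrow> Phi V R \<le> Phi V R'" using R(2) nn by (metis nat_le_eq_zle)
  have mn': "\<forall>R'. orient V E R' \<longrightarrow> Phi V (converse R) \<le> Phi V R'" using mn Phi_converse by metis
  have 1: "\<forall>u\<in>V. D R u \<le> 1" by (rule min_bal[OF fin R(1) mn])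
  have 2: "\<forall>u\<in>V. D (converse R) u \<le> 1" by (rule min_bal[OF fin orient_converse[OF R(1)] mn'])
  have "\<forall>z\<in>V. \<bar>D R z\<bar> \<le> 1"
  proof
    fix z assume "z \<in> V"
    then have "D R z \<le> 1" "- D R z \<le> 1" using 1 2 unfolding D_converse by auto
    then show "\<bar>D R z\<bar> \<le> 1" by linarith
  qed
  then show ?thesis using R(1) by blast
qed

lemma degree_orient:
  assumes ok: "graph_edges_ok V E" and o: "orient V E R" and z: "z \<in> V" and fin: "finite V"
  shows "degree V E z = outd R z + ind R z"
proof -
  have "{u \<in> V. {u, z} \<in> E} = {c. (z, c) \<in> R} \<union> {c. (c, z) \<in> R}"
  proof (rule set_eqI, rule iffI)
    fix u assume "u \<in> {u \<in> V. {u, z} \<in> E}"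
    then have "{u, z} \<in> E" by simp
    then obtain a b where "{u, z} = {a, b}" "(a, b) \<in> R" using orient_cover[OF o] by blast
    then show "u \<in> {c. (z, c) \<in> R} \<union> {c. (c, z) \<in> R}" by (auto simp: doubleton_eq_iff)
  next
    fix u assume "u \<in> {c. (z, c) \<in> R} \<union> {c. (c, z) \<in> R}"
    then have "(z, u) \<in> R \<or> (u, z) \<in> R" by simp
    then have "{u, z} \<in> E" using orient_edge[OF o, of z u] orient_edge[OF o, of u z] by (auto simp: insert_commute)
    moreover have "u \<in> V" using \<open>(z, u) \<in> R \<or> (u, z) \<in> R\<close> orient_sub[OF o] by auto
    ultimately show "u \<in> {u \<in> V. {u, z} \<in> E}" by simp
  qed
  moreover have "{c. (z, c) \<in> R} \<inter> {c. (c, z) \<in> R} = {}" using orient_anti[OF o] by blast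
  ultimately show ?thesis unfolding degree_def outd_def ind_def
    using card_Un_disjoint[OF orient_out_fin[OF fin o] orient_in_fin[OF fin o]] by simp
qed


definition proper :: "('v set \<Rightarrow> nat) \<Rightarrow> 'v set set \<Rightarrow> bool" where
  "proper col E \<longleftrightarrow> (\<forall>e\<in>E. \<forall>e'\<in>E. e \<noteq> e' \<longrightarrow> e \<inter> e' \<noteq> {} \<longrightarrow> col e \<noteq> col e')"

definition bip :: "('v \<Rightarrow> bool) \<Rightarrow> 'v set set \<Rightarrow> bool" where
  "bip side E \<longleftrightarrow> (\<forall>e\<in>E. \<exists>a b. e = {a, b} \<and> side a \<noteq> side b)"

lemma degree_mono_E:
  assumes "finite V" "F \<subseteq> E" shows "degree V F v \<le> degree V E v"
  unfolding degree_def by (rule card_mono) (use assms in auto)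

lemma edges_at_fin:
  assumes fin: "finite V" and ok: "graph_edges_ok V F"
  shows "finite {e \<in> F. z \<in> e} \<and> card {e \<in> F. z \<in> e} \<le> degree V F z"
proof -
  have sub: "{e \<in> F. z \<in> e} \<subseteq> (\<lambda>u. {u, z}) ` {u \<in> V. {u, z} \<in> F}"
  proof
    fix e assume e: "e \<in> {e \<in> F. z \<in> e}"
    then obtain x y where xy: "e = {x, y}" "x \<in> V" "y \<in> V" using ok unfolding graph_edges_ok_def by blast
    have "z = x \<or> z = y" using e xy by auto
    then show "e \<in> (\<lambda>u. {u, z}) ` {u \<in> V. {u, z} \<in> F}"
    proof
      assume "z = x"
      then have "e = {y, z}" using xy by (simp add: insert_commute)
      then show ?thesis using e xy by blast
    next
      assume "z = y"
      then have "e = {x, z}" using xy by simp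
      then show ?thesis using e xy by blast
    qed
  qed
  have f: "finite {u \<in> V. {u, z} \<in> F}" using fin by simp
  show ?thesis
    using finite_subset[OF sub finite_imageI[OF f]] card_mono[OF finite_imageI[OF f] sub] card_image_le[OF f, of "\<lambda>u. {u, z}"]
    unfolding degree_def by linarith
qed

lemma missing_color:
  assumes fin: "finite V" and ok: "graph_edges_ok V F" and d: "degree V F z < k"
  shows "\<exists>\<alpha><k. \<forall>e\<in>F. z \<in> e \<longrightarrow> col e \<noteq> \<alpha>"
proof (rule ccontr)
  assume "\<not> ?thesis"
  then have "{..<k} \<subseteq> col ` {e \<in> F. z \<in> e}" by blast
  moreover have "finite {e \<in> F. z \<in> e}" "card {e \<in> F. z \<in> e} \<le> degree V F z" using edges_at_fin[OF fin ok] by auto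
  ultimately have "k \<le> card (col ` {e \<in> F. z \<in> e})" using card_mono[of "col ` {e \<in> F. z \<in> e}" "{..<k}"] by auto
  also have "\<dots> \<le> card {e \<in> F. z \<in> e}" using card_image_le \<open>finite {e \<in> F. z \<in> e}\<close> by blast
  finally show False using \<open>card {e \<in> F. z \<in> e} \<le> degree V F z\<close> d by simp
qed


lemma kempe:
  assumes fin: "finite V" and okF: "graph_edges_ok V F" and bipF: "bip side F"
    and e0: "e0 = {a, b}" "a \<in> V" "b \<in> V" "side a \<noteq> side b" "e0 \<notin> F"
    and colF: "\<forall>e\<in>F. col e < k" and propF: "proper col F"
    and ab: "\<alpha> < k" "\<beta> < k" "\<alpha> \<noteq> \<beta>"
    and A1: "\<forall>e\<in>F. a \<in> e \<longrightarrow> col e \<noteq> \<alpha>" and B1: "\<forall>e\<in>F. b \<in> e \<longrightarrow> col e \<noteq> \<beta>"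
  shows "\<exists>col'. (\<forall>e\<in>insert e0 F. col' e < k) \<and> proper col' (insert e0 F)"
proof -
  have pr: "col e \<noteq> col e'" if "e \<in> F" "e' \<in> F" "e \<noteq> e'" "z \<in> e" "z \<in> e'" for e e' z
    using propF that unfolding proper_def by blast
  have ne_ab: "a \<noteq> b" using e0 by auto
  define H where "H = {e \<in> F. col e = \<alpha> \<or> col e = \<beta>}"
  have HF: "H \<subseteq> F" unfolding H_def by auto
  have okH: "graph_edges_ok V H" using okF HF unfolding graph_edges_ok_def by blast
  have mdH: "maxdeg2 V H" unfolding maxdeg2_def
  proof
    fix z assume z: "z \<in> V"
    let ?N = "{u \<in> V. {u, z} \<in> H}"
    have "inj_on (\<lambda>u. col {u, z}) ?N"
    proof (rule inj_onI)
      fix u u' assume u: "u \<in> ?N" and u': "u' \<in> ?N" and c: "col {u, z} = col {u', z}"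
      show "u = u'"
      proof (rule ccontr)
        assume "u \<noteq> u'"
        have "u \<noteq> z" using edge_in[OF okH, of u z] u by auto
        then have "{u, z} \<noteq> {u', z}" using \<open>u \<noteq> u'\<close> by (auto simp: doubleton_eq_iff)
        moreover have "{u, z} \<in> F" "{u', z} \<in> F" using u u' HF by auto
        ultimately show False using pr[of "{u, z}" "{u', z}" z] c by auto
      qed
    qed
    moreover have "(\<lambda>u. col {u, z}) ` ?N \<subseteq> {\<alpha>, \<beta>}" unfolding H_def by auto
    ultimately have "card ?N \<le> card {\<alpha>, \<beta>}" by (meson card_inj_on_le finite.emptyI finite.insertI)
    also have "\<dots> \<le> 2" by (simp add: card_insert_if)
    finally show "degree V H z \<le> 2" unfolding degree_def .
  qed
  obtain p where ch: "chain V H p" and hdp: "hd p = b" and lg: "\<forall>q. chain V H q \<and> hd q = b \<longrightarrow> length q \<le> length p"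
    using longest_chain_from[OF fin e0(3)] by blast
  let ?n = "length p"
  have pc: "p \<noteq> []" "distinct p" "set p \<subseteq> V" using ch unfolding chain_def by auto
  have p0: "p ! 0 = b" using hdp pc(1) by (simp add: hd_conv_nth)
  have chE: "{p ! i, p ! Suc i} \<in> H" if "Suc i < ?n" for i using chain_edge[OF ch that] .
  have hdc: "\<forall>u. {u, hd p} \<in> H \<longrightarrow> u \<in> set p"
  proof (intro allI impI)
    fix u assume uH: "{u, hd p} \<in> H"
    show "u \<in> set p"
    proof (rule ccontr)
      assume un: "u \<notin> set p"
      show False
      proof (cases "?n \<ge> 2")
        case True
        have e1: "{p ! 0, p ! Suc 0} \<in> H" using chE[of 0] True by simp
        have c1: "col {u, b} = \<alpha>" using uH hdp B1 HF unfolding H_def by auto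
        have c2: "col {p ! 0, p ! Suc 0} = \<alpha>" using e1 p0 B1 unfolding H_def by auto
        have "p ! Suc 0 \<in> set p" using True by simp
        then have "u \<noteq> p ! Suc 0" using un by auto
        moreover have "u \<noteq> b" using edge_in[OF okH, of u b] uH hdp by auto
        ultimately have "{u, b} \<noteq> {p ! 0, p ! Suc 0}" using p0 by (auto simp: doubleton_eq_iff)
        then show False using pr[of "{u, b}" "{p ! 0, p ! Suc 0}" b] c1 c2 uH e1 HF hdp p0 by auto
      next
        case False
        then have "p = [b]" using pc(1) hdp by (cases p; cases "tl p") auto
        have "chain V H (p @ [u])" using chain_snoc[OF ch _ un] uH edge_in[OF okH, of u "hd p"] \<open>p = [b]\<close> by auto
        moreover have "hd (p @ [u]) = b" using hdp pc(1) by simp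
        ultimately have "length (p @ [u]) \<le> ?n" using lg by blast
        then show False by simp
      qed
    qed
  qed
  have lastc: "\<forall>u. {u, last p} \<in> H \<longrightarrow> u \<in> set p"
  proof (intro allI impI)
    fix u assume uH: "{u, last p} \<in> H"
    show "u \<in> set p"
    proof (rule ccontr)
      assume un: "u \<notin> set p"
      have "chain V H (p @ [u])" using chain_snoc[OF ch uH un] edge_in[OF okH uH] by auto
      moreover have "hd (p @ [u]) = b" using hdp pc(1) by simp
      ultimately have "length (p @ [u]) \<le> ?n" using lg by blast
      then show False by simp
    qed
  qed
  have st1: "\<forall>x\<in>set p. \<forall>u. {u, x} \<in> H \<longrightarrow> u \<in> set p"
    using chain_structure(1)[OF okH fin mdH ch hdc lastc] .
  have C1: "e \<subseteq> set p" if "e \<in> H" "x \<in> e" "x \<in> set p" for e x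
  proof -
    have eH: "e \<in> H" by fact
    obtain y z where yz: "e = {y, z}" using okH eH unfolding graph_edges_ok_def by blast
    have "x = y \<or> x = z" using yz that(2) by auto
    then show ?thesis
    proof
      assume "x = y"
      then have "{z, x} \<in> H" using that(1) yz by (simp add: insert_commute)
      then show ?thesis using st1 that(3) yz \<open>x = y\<close> by blast
    next
      assume "x = z"
      then have "{y, x} \<in> H" using that(1) yz by simp
      then show ?thesis using st1 that(3) yz \<open>x = z\<close> by blast
    qed
  qed
  have par: "col {p ! i, p ! Suc i} = (if even i then \<alpha> else \<beta>)" if "Suc i < ?n" for i
    using that
  proof (induction i)
    case 0
    have "{p ! 0, p ! Suc 0} \<in> H" using chE 0 by blast
    then show ?case using p0 B1 unfolding H_def by auto
  next
    case (Suc i)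
    have IH: "col {p ! i, p ! Suc i} = (if even i then \<alpha> else \<beta>)" using Suc by simp
    have h1: "{p ! i, p ! Suc i} \<in> H" using chE Suc.prems by simp
    have h2: "{p ! Suc i, p ! Suc (Suc i)} \<in> H" using chE Suc.prems by simp
    have "p ! i \<noteq> p ! Suc i" "p ! i \<noteq> p ! Suc (Suc i)" using nth_eq_iff_index_eq[OF pc(2)] Suc.prems by auto
    then have "{p ! i, p ! Suc i} \<noteq> {p ! Suc i, p ! Suc (Suc i)}" by auto
    then have "col {p ! i, p ! Suc i} \<noteq> col {p ! Suc i, p ! Suc (Suc i)}"
      using pr[of "{p ! i, p ! Suc i}" "{p ! Suc i, p ! Suc (Suc i)}" "p ! Suc i"] h1 h2 HF by auto
    moreover have "col {p ! Suc i, p ! Suc (Suc i)} = \<alpha> \<or> col {p ! Suc i, p ! Suc (Suc i)} = \<beta>"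
      using h2 unfolding H_def by simp
    ultimately show ?case using IH ab(3) by auto
  qed
  have sd: "side (p ! i) = (if even i then side b else \<not> side b)" if "i < ?n" for i
    using that
  proof (induction i)
    case 0 then show ?case using p0 by simp
  next
    case (Suc i)
    have "{p ! i, p ! Suc i} \<in> F" using chE Suc.prems HF by blast
    then obtain x y where "{p ! i, p ! Suc i} = {x, y}" "side x \<noteq> side y" using bipF unfolding bip_def by blast
    then have "side (p ! i) \<noteq> side (p ! Suc i)" by (auto simp: doubleton_eq_iff)
    then show ?case using Suc by auto
  qed
  have anp: "a \<notin> set p"
  proof
    assume "a \<in> set p"
    then obtain j where j: "j < ?n" "p ! j = a" by (auto simp: in_set_conv_nth)
    have "j \<noteq> 0"
    proof
      assume "j = 0"
      then have "a = b" using j p0 by simp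
      then show False using ne_ab by simp
    qed
    then obtain i where i: "j = Suc i" by (cases j) auto
    have e1: "{p ! i, p ! Suc i} \<in> H" using chE[of i] i j(1) by blast
    have c1: "col {p ! i, p ! Suc i} = \<beta>" using e1 A1 j i unfolding H_def by auto
    show False
    proof (cases "Suc j < ?n")
      case True
      have e2: "{p ! j, p ! Suc j} \<in> H" using chE True by simp
      have c2: "col {p ! j, p ! Suc j} = \<beta>" using e2 A1 j unfolding H_def by auto
      have "p ! i \<noteq> p ! j" "p ! i \<noteq> p ! Suc j" using nth_eq_iff_index_eq[OF pc(2)] True i by auto
      then have "{p ! i, p ! Suc i} \<noteq> {p ! j, p ! Suc j}" using i by auto
      then show False using pr[of "{p ! i, p ! Suc i}" "{p ! j, p ! Suc j}" a] e1 e2 HF c1 c2 i j by auto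
    next
      case False
      have "col {p ! i, p ! Suc i} = (if even i then \<alpha> else \<beta>)" using par[of i] i j(1) by blast
      then have "odd i" using c1 ab(3) by (auto split: if_splits)
      then have "even j" using i by simp
      then have "side a = side b" using sd[OF j(1)] j(2) by simp
      then show False using e0(4) by simp
    qed
  qed
  have bp: "b \<in> set p" using hdp pc(1) by (metis hd_in_set)
  define S where "S = {e \<in> H. e \<subseteq> set p}"
  define col' where "col' e = (if e = e0 then \<alpha> else if e \<in> S then (if col e = \<alpha> then \<beta> else \<alpha>) else col e)" for e
  have e0S: "e0 \<notin> S" unfolding S_def H_def using e0(5) by auto
  have SH: "S \<subseteq> H" unfolding S_def by auto
  have c'e0: "col' e0 = \<alpha>" unfolding col'_def by simp
  have c'S: "col' e = (if col e = \<alpha> then \<beta> else \<alpha>)" "col e = \<alpha> \<or> col e = \<beta>" if "e \<in> S" for e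
    using that e0S unfolding col'_def S_def H_def by (auto split: if_splits)
  have c'N: "col' e = col e" if "e \<in> F" "e \<notin> S" for e
    using that e0(5) unfolding col'_def by auto
  have key0: "col' e' \<noteq> \<alpha>" if e': "e' \<in> F" "z \<in> e0" "z \<in> e'" for e' z
  proof (cases "e' \<in> S")
    case True
    then have "e' \<subseteq> set p" unfolding S_def by simp
    then have "z \<noteq> a" using anp e'(3) by auto
    then have "z = b" using e'(2) e0(1) by auto
    then have "col e' \<noteq> \<beta>" using B1 e' by auto
    then have "col e' = \<alpha>" using c'S(2)[OF True] by simp
    then show ?thesis using c'S(1)[OF True] ab(3) by simp
  next
    case False
    have "col e' \<noteq> \<alpha>"
    proof
      assume ca: "col e' = \<alpha>"
      have "z = a \<or> z = b" using e'(2) e0(1) by auto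
      then show False
      proof
        assume "z = a" then show False using A1 e' ca by auto
      next
        assume "z = b"
        have "e' \<in> H" using e'(1) ca unfolding H_def by simp
        then have "e' \<subseteq> set p" using C1[of e' b] \<open>z = b\<close> e'(3) bp by simp
        then show False using False \<open>e' \<in> H\<close> unfolding S_def by simp
      qed
    qed
    then show ?thesis using c'N[OF e'(1) False] by simp
  qed
  have keyF: "col' e \<noteq> col' e'" if e: "e \<in> F" "e' \<in> F" "e \<noteq> e'" "z \<in> e" "z \<in> e'" for e e' z
  proof (cases "e \<in> S")
    case True
    show ?thesis
    proof (cases "e' \<in> S")
      case True
      have "col e \<noteq> col e'" using pr e by blast
      then show ?thesis using c'S[OF \<open>e \<in> S\<close>] c'S[OF True] by auto
    next
      case False
      have "col e' \<noteq> \<alpha> \<and> col e' \<noteq> \<beta>"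
      proof (rule ccontr)
        assume "\<not> (col e' \<noteq> \<alpha> \<and> col e' \<noteq> \<beta>)"
        then have "e' \<in> H" using e(2) unfolding H_def by auto
        moreover have "z \<in> set p" using \<open>e \<in> S\<close> e(4) unfolding S_def by auto
        ultimately have "e' \<in> S" using C1[of e' z] e(5) unfolding S_def by auto
        then show False using False by simp
      qed
      then show ?thesis using c'S(1)[OF True] c'N[OF e(2) False] by auto
    qed
  next
    case False
    show ?thesis
    proof (cases "e' \<in> S")
      case True
      have "col e \<noteq> \<alpha> \<and> col e \<noteq> \<beta>"
      proof (rule ccontr)
        assume "\<not> (col e \<noteq> \<alpha> \<and> col e \<noteq> \<beta>)"
        then have "e \<in> H" using e(1) unfolding H_def by auto
        moreover have "z \<in> set p" using \<open>e' \<in> S\<close> e(5) unfolding S_def by auto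
        ultimately have "e \<in> S" using C1[of e z] e(4) unfolding S_def by auto
        then show False using False by simp
      qed
      then show ?thesis using c'S(1)[OF True] c'N[OF e(1) False] by auto
    next
      case False
      have "col e \<noteq> col e'" using pr e by blast
      then show ?thesis using c'N[OF e(1) \<open>e \<notin> S\<close>] c'N[OF e(2) False] by simp
    qed
  qed
  have "proper col' (insert e0 F)"
    unfolding proper_def
  proof (intro ballI impI)
    fix e e' assume e: "e \<in> insert e0 F" "e' \<in> insert e0 F" "e \<noteq> e'" "e \<inter> e' \<noteq> {}"
    then obtain z where z: "z \<in> e" "z \<in> e'" by blast
    show "col' e \<noteq> col' e'"
    proof (cases "e = e0")
      case True
      then have "e' \<in> F" using e by auto
      then show ?thesis using key0[of e' z] True z c'e0 by auto
    next
      case False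
      then have eF: "e \<in> F" using e by auto
      show ?thesis
      proof (cases "e' = e0")
        case True
        then show ?thesis using key0[OF eF, of z] z c'e0 by auto
      next
        case False
        then have "e' \<in> F" using e by auto
        then show ?thesis using keyF[OF eF _ e(3) z] by blast
      qed
    qed
  qed
  moreover have "\<forall>e\<in>insert e0 F. col' e < k"
    unfolding col'_def using colF ab by auto
  ultimately show ?thesis by blast
qed


lemma ok_subset: "graph_edges_ok V E \<Longrightarrow> F \<subseteq> E \<Longrightarrow> graph_edges_ok V F"
  unfolding graph_edges_ok_def by blast

lemma bip_subset: "bip side E \<Longrightarrow> F \<subseteq> E \<Longrightarrow> bip side F"
  unfolding bip_def by blast

lemma edges_pow: "graph_edges_ok V E \<Longrightarrow> E \<subseteq> Pow V"
proof
  fix e assume "graph_edges_ok V E" "e \<in> E"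
  then obtain u v where "e = {u, v}" "u \<in> V" "v \<in> V" unfolding graph_edges_ok_def by blast
  then show "e \<in> Pow V" by simp
qed

theorem konig:
  assumes fin: "finite V"
  shows "graph_edges_ok V E \<Longrightarrow> bip side E \<Longrightarrow> \<forall>v\<in>V. degree V E v \<le> k \<Longrightarrow>
    \<exists>col. (\<forall>e\<in>E. col e < k) \<and> proper col E"
proof (induction "card E" arbitrary: E rule: less_induct)
  case less
  note ok = less.prems(1) and bp = less.prems(2) and dg = less.prems(3)
  have finE: "finite E"
  proof (rule finite_subset[of E "Pow V"])
    show "E \<subseteq> Pow V" using edges_pow[OF ok] .
    show "finite (Pow V)" using fin by simp
  qed
  show ?case
  proof (cases "E = {}")
    case True
    then show ?thesis unfolding proper_def by auto
  next
    case False
    then obtain e0 where e0E: "e0 \<in> E" by blast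
    define F where "F = E - {e0}"
    have EF: "E = insert e0 F" "e0 \<notin> F" using e0E unfolding F_def by auto
    have cF: "card F < card E" unfolding F_def by (rule card_Diff1_less[OF finE e0E])
    have FE: "F \<subseteq> E" unfolding F_def by auto
    have okF: "graph_edges_ok V F" using ok_subset[OF ok FE] .
    have bpF: "bip side F" using bip_subset[OF bp FE] .
    have dgF: "\<forall>v\<in>V. degree V F v \<le> k"
    proof
      fix v assume "v \<in> V"
      then show "degree V F v \<le> k" using dg degree_mono_E[OF fin FE, of v] by auto
    qed
    obtain col where colF: "\<forall>e\<in>F. col e < k" and prF: "proper col F"
      using less.hyps[OF cF okF bpF dgF] by blast
    obtain a b where ab: "e0 = {a, b}" "side a \<noteq> side b" using bp e0E unfolding bip_def by blast
    have abV: "a \<in> V" "b \<in> V" "a \<noteq> b" using edge_in[OF ok] e0E ab(1) by auto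
    have dlt: "degree V F z < k" if z: "z \<in> {a, b}" for z
    proof -
      let ?w = "if z = a then b else a"
      have e: "{?w, z} = e0" using z ab(1) abV(3) by (auto simp: insert_commute)
      have "{u \<in> V. {u, z} \<in> F} \<subset> {u \<in> V. {u, z} \<in> E}"
      proof
        show "{u \<in> V. {u, z} \<in> F} \<subseteq> {u \<in> V. {u, z} \<in> E}" using EF by auto
        have "?w \<in> {u \<in> V. {u, z} \<in> E}" using e e0E abV by auto
        moreover have "?w \<notin> {u \<in> V. {u, z} \<in> F}" using e EF(2) by auto
        ultimately show "{u \<in> V. {u, z} \<in> F} \<noteq> {u \<in> V. {u, z} \<in> E}" by blast
      qed
      then have "degree V F z < degree V E z" unfolding degree_def by (rule psubset_card_mono[rotated]) (use fin in simp)
      moreover have "z \<in> V" using z abV by auto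
      ultimately show ?thesis using dg \<open>z \<in> V\<close> by (meson order.strict_trans2)
    qed
    obtain \<alpha> where \<alpha>: "\<alpha> < k" "\<forall>e\<in>F. a \<in> e \<longrightarrow> col e \<noteq> \<alpha>"
      using missing_color[OF fin okF dlt[of a]] by auto
    obtain \<beta> where \<beta>: "\<beta> < k" "\<forall>e\<in>F. b \<in> e \<longrightarrow> col e \<noteq> \<beta>"
      using missing_color[OF fin okF dlt[of b]] by auto
    show ?thesis
    proof (cases "\<forall>e\<in>F. b \<in> e \<longrightarrow> col e \<noteq> \<alpha>")
      case True
      define col' where "col' = col(e0 := \<alpha>)"
      have k0: "col' e' \<noteq> \<alpha>" if "e' \<in> F" "z \<in> e0" "z \<in> e'" for e' z
      proof -
        have "col' e' = col e'" unfolding col'_def using that(1) EF(2) by auto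
        moreover have "z = a \<or> z = b" using that(2) ab(1) by auto
        ultimately show ?thesis using \<alpha>(2) True that by auto
      qed
      have "proper col' E"
        unfolding proper_def
      proof (intro ballI impI)
        fix e e' assume e: "e \<in> E" "e' \<in> E" "e \<noteq> e'" "e \<inter> e' \<noteq> {}"
        then obtain z where z: "z \<in> e" "z \<in> e'" by blast
        show "col' e \<noteq> col' e'"
        proof (cases "e = e0")
          case True
          then have "e' \<in> F" using e EF by auto
          then show ?thesis using k0[of e' z] True z unfolding col'_def by auto
        next
          case False
          then have eF: "e \<in> F" using e EF by auto
          show ?thesis
          proof (cases "e' = e0")
            case True
            then show ?thesis using k0[OF eF, of z] z unfolding col'_def by auto
          next
            case False
            then have "e' \<in> F" using e EF by auto
            then have "col e \<noteq> col e'" using prF eF e(3,4) unfolding proper_def by blast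
            then show ?thesis unfolding col'_def using \<open>e \<noteq> e0\<close> False by simp
          qed
        qed
      qed
      moreover have "\<forall>e\<in>E. col' e < k" unfolding col'_def using EF colF \<alpha>(1) by auto
      ultimately show ?thesis by blast
    next
      case False
      then have "\<alpha> \<noteq> \<beta>" using \<beta>(2) by blast
      then show ?thesis
        using kempe[OF fin okF bpF ab(1) abV(1,2) ab(2) EF(2) colF prF \<alpha>(1) \<beta>(1) _ \<alpha>(2) \<beta>(2)] EF(1) by simp
    qed
  qed
qed


theorem decomp:
  assumes fin: "finite V" and ok: "graph_edges_ok V E" and dg: "\<forall>v\<in>V. degree V E v \<le> 2 * k"
  shows "\<exists>Es. (\<forall>i<k. Es i \<subseteq> E \<and> maxdeg2 V (Es i)) \<and> E = (\<Union>i<k. Es i)"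
proof -
  obtain R where o: "orient V E R" and bal: "\<forall>z\<in>V. \<bar>D R z\<bar> \<le> 1"
    using balanced_orient[OF fin ok] by blast
  have ok_k: "outd R z \<le> k \<and> ind R z \<le> k" if z: "z \<in> V" for z
  proof -
    have "degree V E z \<le> 2 * k" using dg z by blast
    then have "outd R z + ind R z \<le> 2 * k" using degree_orient[OF ok o z fin] by simp
    moreover have "\<bar>int (outd R z) - int (ind R z)\<bar> \<le> 1" using bal z unfolding D_def by simp
    ultimately show ?thesis by linarith
  qed
  define VB where "VB = V \<times> (UNIV :: bool set)"
  define mk :: "'a \<times> 'a \<Rightarrow> ('a \<times> bool) set" where "mk = (\<lambda>(a, b). {(a, True), (b, False)})"
  have mk: "mk (a, b) = {(a, True), (b, False)}" for a b unfolding mk_def by simp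
  define EB where "EB = mk ` R"
  have EBm: "{(a, True), (b, False)} \<in> EB" if "(a, b) \<in> R" for a b
    unfolding EB_def using that mk by (metis imageI)
  have EBc: "\<exists>a b. e = {(a, True), (b, False)} \<and> (a, b) \<in> R" if "e \<in> EB" for e
  proof -
    obtain ab where "ab \<in> R" "e = mk ab" using \<open>e \<in> EB\<close> unfolding EB_def by blast
    then show ?thesis using mk by (cases ab) auto
  qed
  have finB: "finite VB" unfolding VB_def using fin by simp
  have okB: "graph_edges_ok VB EB" unfolding graph_edges_ok_def
  proof
    fix e assume "e \<in> EB"
    then obtain a b where ab: "e = {(a, True), (b, False)}" "(a, b) \<in> R" using EBc by blast
    then have "a \<in> V" "b \<in> V" using orient_sub[OF o] by auto
    then show "\<exists>u v. e = {u, v} \<and> u \<in> VB \<and> v \<in> VB \<and> u \<noteq> v" using ab unfolding VB_def by blast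
  qed
  have bipB: "bip snd EB" unfolding bip_def
  proof
    fix e assume "e \<in> EB"
    then obtain a b where ab: "e = {(a, True), (b, False)}" using EBc by blast
    then show "\<exists>x y. e = {x, y} \<and> snd x \<noteq> snd y" by (intro exI[of _ "(a, True)"] exI[of _ "(b, False)"]) simp
  qed
  have dgB: "\<forall>v\<in>VB. degree VB EB v \<le> k"
  proof
    fix v assume "v \<in> VB"
    then obtain z s where v: "v = (z, s)" "z \<in> V" unfolding VB_def by blast
    show "degree VB EB v \<le> k"
    proof (cases s)
      case True
      have sub: "{u \<in> VB. {u, v} \<in> EB} \<subseteq> (\<lambda>c. (c, False)) ` {c. (z, c) \<in> R}"
      proof
        fix u assume "u \<in> {u \<in> VB. {u, v} \<in> EB}"
        then have "{u, v} \<in> EB" by simp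
        then have "{u, (z, True)} \<in> EB" using v True by simp
        then obtain a b where ab: "{u, (z, True)} = {(a, True), (b, False)}" "(a, b) \<in> R" using EBc by blast
        then have "u = (b, False)" "a = z" by (auto simp: doubleton_eq_iff)
        then show "u \<in> (\<lambda>c. (c, False)) ` {c. (z, c) \<in> R}" using ab by auto
      qed
      have "degree VB EB v \<le> card ((\<lambda>c. (c, False)) ` {c. (z, c) \<in> R})"
        unfolding degree_def by (rule card_mono[OF _ sub]) (use orient_out_fin[OF fin o] in simp)
      also have "\<dots> \<le> outd R z" unfolding outd_def by (rule card_image_le) (rule orient_out_fin[OF fin o])
      finally show ?thesis using ok_k[OF v(2)] by simp
    next
      case False
      have sub: "{u \<in> VB. {u, v} \<in> EB} \<subseteq> (\<lambda>c. (c, True)) ` {c. (c, z) \<in> R}"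
      proof
        fix u assume "u \<in> {u \<in> VB. {u, v} \<in> EB}"
        then have "{u, v} \<in> EB" by simp
        then have "{u, (z, False)} \<in> EB" using v False by simp
        then obtain a b where ab: "{u, (z, False)} = {(a, True), (b, False)}" "(a, b) \<in> R" using EBc by blast
        then have "u = (a, True)" "b = z" by (auto simp: doubleton_eq_iff)
        then show "u \<in> (\<lambda>c. (c, True)) ` {c. (c, z) \<in> R}" using ab by auto
      qed
      have "degree VB EB v \<le> card ((\<lambda>c. (c, True)) ` {c. (c, z) \<in> R})"
        unfolding degree_def by (rule card_mono[OF _ sub]) (use orient_in_fin[OF fin o] in simp)
      also have "\<dots> \<le> ind R z" unfolding ind_def by (rule card_image_le) (rule orient_in_fin[OF fin o])
      finally show ?thesis using ok_k[OF v(2)] by simp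
    qed
  qed
  obtain col where colk: "\<forall>e\<in>EB. col e < k" and pr: "proper col EB"
    using konig[OF finB okB bipB dgB] by blast
  have prB: "col e \<noteq> col e'" if "e \<in> EB" "e' \<in> EB" "e \<noteq> e'" "x \<in> e" "x \<in> e'" for e e' x
    using pr that unfolding proper_def by blast
  define Es where "Es i = {{a, b} | a b. (a, b) \<in> R \<and> col {(a, True), (b, False)} = i}" for i
  have EsE: "Es i \<subseteq> E" for i unfolding Es_def using orient_edge[OF o] by blast
  have md: "maxdeg2 V (Es i)" for i
    unfolding maxdeg2_def
  proof
    fix z assume z: "z \<in> V"
    define Os where "Os = {c. (z, c) \<in> R \<and> col {(z, True), (c, False)} = i}"
    define Is where "Is = {c. (c, z) \<in> R \<and> col {(c, True), (z, False)} = i}"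
    have "{u \<in> V. {u, z} \<in> Es i} \<subseteq> Os \<union> Is"
    proof
      fix u assume "u \<in> {u \<in> V. {u, z} \<in> Es i}"
      then obtain a b where ab: "{u, z} = {a, b}" "(a, b) \<in> R" "col {(a, True), (b, False)} = i"
        unfolding Es_def by blast
      then have "(a = u \<and> b = z) \<or> (a = z \<and> b = u)" by (auto simp: doubleton_eq_iff)
      then show "u \<in> Os \<union> Is" using ab unfolding Os_def Is_def by auto
    qed
    moreover have fOs: "finite Os" unfolding Os_def using orient_out_fin[OF fin o, of z] by (rule finite_subset[rotated]) auto
    moreover have fIs: "finite Is" unfolding Is_def using orient_in_fin[OF fin o, of z] by (rule finite_subset[rotated]) auto
    ultimately have "card {u \<in> V. {u, z} \<in> Es i} \<le> card (Os \<union> Is)" by (intro card_mono) auto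
    also have "\<dots> \<le> card Os + card Is" by (rule card_Un_le)
    also have "card Os \<le> 1"
    proof -
      have "\<forall>c\<in>Os. \<forall>c'\<in>Os. c = c'"
      proof (intro ballI, rule ccontr)
        fix c c' assume c: "c \<in> Os" "c' \<in> Os" "c \<noteq> c'"
        have m1: "{(z, True), (c, False)} \<in> EB" "{(z, True), (c', False)} \<in> EB" using c EBm unfolding Os_def by auto
        have "(c, False) \<notin> {(z, True), (c', False)}" using c(3) by simp
        then have m2: "{(z, True), (c, False)} \<noteq> {(z, True), (c', False)}" by blast
        have "col {(z, True), (c, False)} \<noteq> col {(z, True), (c', False)}"
          by (rule prB[OF m1(1) m1(2) m2, of "(z, True)"]) simp_all
        then show False using c unfolding Os_def by simp
      qed
      then show ?thesis using card_le_Suc0_iff_eq[OF fOs] by simp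
    qed
    also have "card Is \<le> 1"
    proof -
      have "\<forall>c\<in>Is. \<forall>c'\<in>Is. c = c'"
      proof (intro ballI, rule ccontr)
        fix c c' assume c: "c \<in> Is" "c' \<in> Is" "c \<noteq> c'"
        have m1: "{(c, True), (z, False)} \<in> EB" "{(c', True), (z, False)} \<in> EB" using c EBm unfolding Is_def by auto
        have "(c, True) \<notin> {(c', True), (z, False)}" using c(3) by simp
        then have m2: "{(c, True), (z, False)} \<noteq> {(c', True), (z, False)}" by blast
        have "col {(c, True), (z, False)} \<noteq> col {(c', True), (z, False)}"
          by (rule prB[OF m1(1) m1(2) m2, of "(z, False)"]) simp_all
        then show False using c unfolding Is_def by simp
      qed
      then show ?thesis using card_le_Suc0_iff_eq[OF fIs] by simp
    qed
    finally show "degree V (Es i) z \<le> 2" unfolding degree_def by simp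
  qed
  have "E = (\<Union>i<k. Es i)"
  proof
    show "E \<subseteq> (\<Union>i<k. Es i)"
    proof
      fix e assume "e \<in> E"
      then obtain a b where ab: "e = {a, b}" "(a, b) \<in> R" using orient_cover[OF o] by blast
      then have "col {(a, True), (b, False)} < k" using colk EBm by blast
      moreover have "e \<in> Es (col {(a, True), (b, False)})" unfolding Es_def using ab by blast
      ultimately show "e \<in> (\<Union>i<k. Es i)" by blast
    qed
    show "(\<Union>i<k. Es i) \<subseteq> E" using EsE by blast
  qed
  then show ?thesis using EsE md by blast
qed


lemma kOR:
  assumes fin: "finite V" and ne: "V \<noteq> {}" and ok: "graph_edges_ok V E" and dg: "\<forall>v\<in>V. degree V E v \<le> 2 * k"
  shows "k_OR_PCG k V E"
proof -
  obtain Es where Es: "\<forall>i<k. Es i \<subseteq> E \<and> maxdeg2 V (Es i)" "E = (\<Union>i<k. Es i)"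
    using decomp[OF fin ok dg] by blast
  have "\<forall>i<k. PCG V (Es i)"
  proof (intro allI impI)
    fix i assume "i < k"
    then have "Es i \<subseteq> E" "maxdeg2 V (Es i)" using Es(1) by auto
    then show "PCG V (Es i)" using maxdeg2_PCG[OF fin ne ok_subset[OF ok] ] by blast
  qed
  then show ?thesis unfolding k_OR_PCG_def using Es(2) by blast
qed

lemma ceil_half: "\<Delta> \<le> 2 * nat \<lceil>real \<Delta> / 2\<rceil>"
proof -
  have "real \<Delta> / 2 \<le> real_of_int \<lceil>real \<Delta> / 2\<rceil>" by (rule le_of_int_ceiling)
  then have "int \<Delta> \<le> 2 * \<lceil>real \<Delta> / 2\<rceil>" by linarith
  moreover have "0 \<le> \<lceil>real \<Delta> / 2\<rceil>" by simp
  ultimately show ?thesis by linarith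
qed

theorem theorem5:
  shows "(\<forall>(V :: 'a set) E. simple_graph V E \<and> connected_graph V E \<and>
            (\<forall>v\<in>V. degree V E v \<le> 3) \<longrightarrow> k_OR_PCG 2 V E)
       \<and> (\<forall>(V :: 'a set) E \<Delta>. simple_graph V E \<and> regular_graph V E \<Delta> \<and> even \<Delta> \<longrightarrow>
            k_OR_PCG (\<Delta> div 2) V E)
       \<and> (\<forall>(V :: 'a set) E \<Delta>. simple_graph V E \<and> bipartite_graph V E \<and> regular_graph V E \<Delta> \<and> odd \<Delta> \<longrightarrow>
            k_OR_PCG (nat \<lceil>real \<Delta> / 2\<rceil>) V E)"
proof (intro conjI allI impI)
  fix V :: "'a set" and E
  assume h: "simple_graph V E \<and> connected_graph V E \<and> (\<forall>v\<in>V. degree V E v \<le> 3)"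
  then have "\<forall>v\<in>V. degree V E v \<le> 2 * 2" by fastforce
  then show "k_OR_PCG 2 V E" using kOR h unfolding simple_graph_def by blast
next
  fix V :: "'a set" and E \<Delta>
  assume h: "simple_graph V E \<and> regular_graph V E \<Delta> \<and> even \<Delta>"
  then have "\<forall>v\<in>V. degree V E v \<le> 2 * (\<Delta> div 2)" unfolding regular_graph_def by auto
  then show "k_OR_PCG (\<Delta> div 2) V E" using kOR h unfolding simple_graph_def by blast
next
  fix V :: "'a set" and E \<Delta>
  assume h: "simple_graph V E \<and> bipartite_graph V E \<and> regular_graph V E \<Delta> \<and> odd \<Delta>"
  then have "\<forall>v\<in>V. degree V E v \<le> 2 * nat \<lceil>real \<Delta> / 2\<rceil>" unfolding regular_graph_def using ceil_half by auto
  then show "k_OR_PCG (nat \<lceil>real \<Delta> / 2\<rceil>) V E" using kOR h unfolding simple_graph_def by blast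
qed


end
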